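(* Let $\mathcal H$ be a separable Hilbert space and $\mathcal A$ a $C^*$-subalgebra of $\mathbf B(\mathcal H)$ with $\mathbf K(\mathcal H)\subseteq\mathcal A$. Let $A_i,B_i\in\mathcal A$, $i=1,\dots,m$, and let $\Phi=\sum_{i=1}^mM_{A_i,B_i}$ acting on $\mathcal A$. If the operators $B_1,\dots,B_m$ (resp. $A_1,\dots,A_m$) are linearly independent, then there exist $r\in\mathbb N$ and $C>0$ such that for every $n\in\mathbb N$ and every $i=1,\dots,m$, $$s_{rn-r+1}(A_i)\le C\,\mathrm h_n(\Phi)\quad(\text{resp. } s_{rn-r+1}(B_i)\le C\,\mathrm h_n(\Phi)).$$ In particular, if $\mathfrak i$ is a Calkin space and $\mathrm h(\Phi)\in\mathfrak i$, then $s(A_i)\in\mathfrak i$ (resp. $s(B_i)\in\mathfrak i$) for every $i$.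
   Context: $M_{A,B}(X)=AXB$ for $X\in\mathcal A$. For $T\in\mathbf B(\mathcal H)$, $s_n(T)$ denotes its $n$-th singular number, i.e. the approximation number $\inf\{\|T-F\|:\mathrm{rank}F<n\}$ (the usual singular value when $T$ is compact). Hilbert numbers of a bounded operator $T:\mathcal X\to\mathcal Y$ between Banach spaces: $\mathrm h_n(T)=\sup s_n(ATB)$ over all Hilbert spaces $\mathcal H',\mathcal K'$ and contractions $A\in\mathbf B(\mathcal Y,\mathcal H')$, $B\in\mathbf B(\mathcal K',\mathcal X)$. $c_0$: complex null sequences; $\alpha^\star$: non-increasing rearrangement of $(|\alpha_n|)$. A Calkin space is a linear subspace $\mathfrak i\subseteq c_0$ such that $\alpha\in\mathfrak i,\beta\in c_0,\beta^\star\le\alpha^\star$ imply $\beta\in\mathfrak i$. *)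

theory Defs
  imports "HOL-Analysis.Analysis" "HOL-Library.Extended_Nat"
begin

class complex_vector = real_vector +
  fixes scaleC :: "complex \<Rightarrow> 'a \<Rightarrow> 'a" (infixr "*\<^sub>C" 75)
  assumes scaleC_add_right: "a *\<^sub>C (x + y) = a *\<^sub>C x + a *\<^sub>C y"
    and scaleC_add_left: "(a + b) *\<^sub>C x = a *\<^sub>C x + b *\<^sub>C x"
    and scaleC_scaleC: "a *\<^sub>C (b *\<^sub>C x) = (a * b) *\<^sub>C x"
    and scaleC_one: "1 *\<^sub>C x = x"
    and scaleR_scaleC: "r *\<^sub>R x = complex_of_real r *\<^sub>C x"

class complex_inner = complex_vector + real_normed_vector +
  fixes cinner :: "'a \<Rightarrow> 'a \<Rightarrow> complex"
  assumes cinner_commute: "cinner x y = cnj (cinner y x)"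
    and cinner_add_left: "cinner (x + y) z = cinner x z + cinner y z"
    and cinner_scaleC_left: "cinner (c *\<^sub>C x) y = cnj c * cinner x y"
    and cinner_ge_zero: "0 \<le> Re (cinner x x)"
    and cinner_eq_zero_iff: "cinner x x = 0 \<longleftrightarrow> x = 0"
    and norm_eq_sqrt_cinner: "norm x = sqrt (Re (cinner x x))"

class chilbert_space = complex_inner + complete_space

definition separable_type :: "'a::metric_space itself \<Rightarrow> bool" where
  "separable_type (_::'a itself) \<longleftrightarrow> (\<exists>D::'a set. countable D \<and> closure D = UNIV)"

definition cspan :: "'a::complex_vector set \<Rightarrow> 'a set" where
  "cspan V = {y. \<exists>W c. finite W \<and> W \<subseteq> V \<and> y = (\<Sum>v\<in>W. c v *\<^sub>C v)}"

definition cfinite_dim :: "'a::complex_vector itself \<Rightarrow> bool" where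
  "cfinite_dim (_::'a itself) \<longleftrightarrow> (\<exists>V::'a set. finite V \<and> cspan V = UNIV)"

definition clinear :: "('a::complex_vector \<Rightarrow> 'b::complex_vector) \<Rightarrow> bool" where
  "clinear f \<longleftrightarrow> (\<forall>x y. f (x + y) = f x + f y) \<and> (\<forall>c x. f (c *\<^sub>C x) = c *\<^sub>C f x)"

definition bounded_clinear ::
  "('a::{complex_vector,real_normed_vector} \<Rightarrow> 'b::{complex_vector,real_normed_vector}) \<Rightarrow> bool" where
  "bounded_clinear f \<longleftrightarrow> clinear f \<and> (\<exists>K. \<forall>x. norm (f x) \<le> norm x * K)"

text \<open>Rank of an operator (complex dimension of its range; \<infinity> if infinite).\<close>
definition crank :: "('a \<Rightarrow> 'b::complex_vector) \<Rightarrow> enat" where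
  "crank F = (INF V\<in>{V. finite V \<and> range F \<subseteq> cspan V}. enat (card V))"

definition approx_num ::
  "nat \<Rightarrow> ('a::{complex_vector,real_normed_vector} \<Rightarrow> 'b::{complex_vector,real_normed_vector}) \<Rightarrow> real" where
  "approx_num n T = Inf {onorm (\<lambda>x. T x - F x) | F. bounded_clinear F \<and> crank F < enat n}"

definition cadjoint :: "('h::complex_inner \<Rightarrow> 'h) \<Rightarrow> ('h \<Rightarrow> 'h)" where
  "cadjoint T = (SOME S. \<forall>x y. cinner (T x) y = cinner x (S y))"

definition compact_op :: "('h::complex_inner \<Rightarrow> 'h) \<Rightarrow> bool" where
  "compact_op T \<longleftrightarrow> bounded_clinear T \<and> compact (closure (T ` cball 0 1))"

definition cstar_subalgebra :: "('h::chilbert_space \<Rightarrow> 'h) set \<Rightarrow> bool" where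
  "cstar_subalgebra \<A> \<longleftrightarrow>
     \<A> \<subseteq> Collect bounded_clinear \<and> (\<lambda>_. 0) \<in> \<A> \<and>
     (\<forall>S\<in>\<A>. \<forall>T\<in>\<A>. (\<lambda>x. S x + T x) \<in> \<A> \<and> (S \<circ> T) \<in> \<A>) \<and>
     (\<forall>c. \<forall>T\<in>\<A>. (\<lambda>x. c *\<^sub>C T x) \<in> \<A>) \<and>
     (\<forall>T\<in>\<A>. cadjoint T \<in> \<A>) \<and>
     (\<forall>T. bounded_clinear T \<and> (\<forall>e>0. \<exists>S\<in>\<A>. onorm (\<lambda>x. T x - S x) < e) \<longrightarrow> T \<in> \<A>)"

definition elem_op :: "nat \<Rightarrow> (nat \<Rightarrow> 'h \<Rightarrow> 'h::complex_vector) \<Rightarrow> (nat \<Rightarrow> 'h \<Rightarrow> 'h)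
    \<Rightarrow> ('h \<Rightarrow> 'h) \<Rightarrow> ('h \<Rightarrow> 'h)" where
  "elem_op m A B X = (\<lambda>x. \<Sum>i<m. A i (X (B i x)))"

definition clin_indep_ops :: "nat \<Rightarrow> (nat \<Rightarrow> 'h \<Rightarrow> 'h::complex_vector) \<Rightarrow> bool" where
  "clin_indep_ops m B \<longleftrightarrow>
     (\<forall>c. (\<forall>x. (\<Sum>i<m. c i *\<^sub>C B i x) = 0) \<longrightarrow> (\<forall>i<m. c i = 0))"

text \<open>Hilbert numbers of a bounded operator Phi on the Banach space \<A> (with the
  operator norm): sup of s_n(P o Phi o Q) over contractions Q : K' -> \<A> and
  P : \<A> -> H', where H' = K' is the Hilbert space type 'k.\<close>
definition hilbert_num :: "'k::chilbert_space itself \<Rightarrow> ('h::chilbert_space \<Rightarrow> 'h) set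
    \<Rightarrow> (('h \<Rightarrow> 'h) \<Rightarrow> ('h \<Rightarrow> 'h)) \<Rightarrow> nat \<Rightarrow> real" where
  "hilbert_num (_::'k itself) \<A> \<Phi> n = Sup {approx_num n (\<lambda>x::'k. P (\<Phi> (Q x))) | P Q.
     (\<forall>X\<in>\<A>. \<forall>Y\<in>\<A>. P (\<lambda>h. X h + Y h) = P X + P Y) \<and>
     (\<forall>c. \<forall>X\<in>\<A>. P (\<lambda>h. c *\<^sub>C X h) = c *\<^sub>C P X) \<and>
     (\<forall>X\<in>\<A>. norm (P X :: 'k) \<le> onorm X) \<and>
     (\<forall>x. Q x \<in> \<A>) \<and>
     (\<forall>x y. Q (x + y) = (\<lambda>h. Q x h + Q y h)) \<and>
     (\<forall>c x. Q (c *\<^sub>C x) = (\<lambda>h. c *\<^sub>C Q x h)) \<and>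
     (\<forall>x. onorm (Q x) \<le> norm x)}"

definition c0 :: "(nat \<Rightarrow> complex) set" where
  "c0 = {\<alpha>. \<alpha> \<longlonglongrightarrow> 0}"

text \<open>Non-increasing rearrangement of (|alpha_k|), indexed from 0.\<close>
definition decr_rearr :: "(nat \<Rightarrow> complex) \<Rightarrow> nat \<Rightarrow> real" where
  "decr_rearr \<alpha> n = Inf {t. 0 \<le> t \<and> finite {k. cmod (\<alpha> k) > t} \<and> card {k. cmod (\<alpha> k) > t} \<le> n}"

definition calkin_space :: "(nat \<Rightarrow> complex) set \<Rightarrow> bool" where
  "calkin_space I \<longleftrightarrow> I \<subseteq> c0 \<and> (\<lambda>_. 0) \<in> I \<and>
     (\<forall>\<alpha>\<in>I. \<forall>\<beta>\<in>I. (\<lambda>n. \<alpha> n + \<beta> n) \<in> I) \<and>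
     (\<forall>c. \<forall>\<alpha>\<in>I. (\<lambda>n. c * \<alpha> n) \<in> I) \<and>
     (\<forall>\<alpha>\<in>I. \<forall>\<beta>\<in>c0. (\<forall>n. decr_rearr \<beta> n \<le> decr_rearr \<alpha> n) \<longrightarrow> \<beta> \<in> I)"

text \<open>Sequences s(T) = (s_1(T), s_2(T), ...) and h(Phi), re-indexed from 0.\<close>
definition sing_seq :: "('h::chilbert_space \<Rightarrow> 'h) \<Rightarrow> nat \<Rightarrow> complex" where
  "sing_seq T n = complex_of_real (approx_num (Suc n) T)"

definition hilb_seq :: "'k::chilbert_space itself \<Rightarrow> ('h::chilbert_space \<Rightarrow> 'h) set
    \<Rightarrow> (('h \<Rightarrow> 'h) \<Rightarrow> ('h \<Rightarrow> 'h)) \<Rightarrow> nat \<Rightarrow> complex" where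
  "hilb_seq K \<A> \<Phi> n = complex_of_real (hilbert_num K \<A> \<Phi> (Suc n))"

end

theory Submission
  imports Defs
begin


declare [[show_types=false]]
lemma scaleC_zero_left[simp]: "0 *\<^sub>C x = 0"
proof -
  have "0 *\<^sub>R x = complex_of_real 0 *\<^sub>C x" by (rule scaleR_scaleC)
  thus ?thesis by simp
qed
lemma scaleC_minus1: "(-1) *\<^sub>C x = - x"
  by (metis scaleR_scaleC scaleR_minus1_left of_real_minus of_real_1)
lemma scaleC_zero_right[simp]: "a *\<^sub>C 0 = 0"
proof -
  have "a *\<^sub>C 0 = a *\<^sub>C (0 + 0)" by simp
  also have "\<dots> = a *\<^sub>C 0 + a *\<^sub>C 0" by (rule scaleC_add_right)
  finally show ?thesis by simp
qed
lemma scaleC_minus_right: "a *\<^sub>C (- x) = - (a *\<^sub>C x)"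
proof -
  have "a *\<^sub>C (- x) = a *\<^sub>C ((-1) *\<^sub>C x)" by (simp add: scaleC_minus1)
  also have "\<dots> = (-1) *\<^sub>C (a *\<^sub>C x)" by (simp add: scaleC_scaleC)
  also have "\<dots> = - (a *\<^sub>C x)" by (simp add: scaleC_minus1)
  finally show ?thesis .
qed
lemma scaleC_minus_left: "(- a) *\<^sub>C x = - (a *\<^sub>C x)"
proof -
  have "(- a) *\<^sub>C x = ((-1) * a) *\<^sub>C x" by simp
  also have "\<dots> = (-1) *\<^sub>C (a *\<^sub>C x)" by (simp only: scaleC_scaleC)
  also have "\<dots> = - (a *\<^sub>C x)" by (simp add: scaleC_minus1)
  finally show ?thesis .
qed
lemma scaleC_diff_right: "a *\<^sub>C (x - y) = a *\<^sub>C x - a *\<^sub>C y"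
  by (simp only: diff_conv_add_uminus scaleC_add_right scaleC_minus_right)
lemma scaleC_diff_left: "(a - b) *\<^sub>C x = a *\<^sub>C x - b *\<^sub>C x"
  by (simp only: diff_conv_add_uminus scaleC_add_left scaleC_minus_left)
lemma scaleC_sum_right: "a *\<^sub>C (\<Sum>i\<in>I. f i) = (\<Sum>i\<in>I. a *\<^sub>C f i)"
  by (induction I rule: infinite_finite_induct) (auto simp: scaleC_add_right)
lemma scaleC_sum_left: "(\<Sum>i\<in>I. f i) *\<^sub>C x = (\<Sum>i\<in>I. f i *\<^sub>C x)"
  by (induction I rule: infinite_finite_induct) (auto simp: scaleC_add_left)
lemma scaleC_of_real: "complex_of_real r *\<^sub>C x = r *\<^sub>R x"
  by (simp add: scaleR_scaleC)



lemma cinner_add_right: "cinner x (y + z) = cinner x y + cinner x z"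
proof -
  have "cinner x (y + z) = cnj (cinner (y + z) x)" by (rule cinner_commute)
  also have "\<dots> = cnj (cinner y x) + cnj (cinner z x)" by (simp add: cinner_add_left)
  finally show ?thesis by (simp add: cinner_commute[of x y] cinner_commute[of x z])
qed
lemma cinner_scaleC_right: "cinner x (c *\<^sub>C y) = c * cinner x y"
proof -
  have "cinner x (c *\<^sub>C y) = cnj (cinner (c *\<^sub>C y) x)" by (rule cinner_commute)
  also have "\<dots> = c * cnj (cinner y x)" by (simp add: cinner_scaleC_left)
  finally show ?thesis by (simp add: cinner_commute[of x y])
qed
lemma cinner_zero_left[simp]: "cinner 0 y = 0"
  using cinner_add_left[of 0 0 y] by simp
lemma cinner_zero_right[simp]: "cinner x 0 = 0"
  using cinner_add_right[of x 0 0] by simp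
lemma cinner_minus_left: "cinner (- x) y = - cinner x y"
proof -
  have "cinner (- x) y = cinner ((-1) *\<^sub>C x) y" by (simp add: scaleC_minus1)
  thus ?thesis by (simp add: cinner_scaleC_left)
qed
lemma cinner_minus_right: "cinner x (- y) = - cinner x y"
proof -
  have "cinner x (- y) = cinner x ((-1) *\<^sub>C y)" by (simp add: scaleC_minus1)
  thus ?thesis by (simp add: cinner_scaleC_right)
qed
lemma cinner_diff_left: "cinner (x - y) z = cinner x z - cinner y z"
  unfolding diff_conv_add_uminus cinner_add_left cinner_minus_left ..
lemma cinner_diff_right: "cinner x (y - z) = cinner x y - cinner x z"
  unfolding diff_conv_add_uminus cinner_add_right cinner_minus_right ..
lemma cinner_sum_left: "cinner (\<Sum>i\<in>I. f i) y = (\<Sum>i\<in>I. cinner (f i) y)"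
  by (induction I rule: infinite_finite_induct) (auto simp: cinner_add_left)
lemma cinner_sum_right: "cinner x (\<Sum>i\<in>I. f i) = (\<Sum>i\<in>I. cinner x (f i))"
  by (induction I rule: infinite_finite_induct) (auto simp: cinner_add_right)
lemma cinner_self_real: "cinner x x = complex_of_real (Re (cinner x x))"
proof -
  have "Im (cinner x x) = Im (cnj (cinner x x))" using cinner_commute[of x x] by simp
  hence "Im (cinner x x) = 0" by simp
  thus ?thesis by (simp add: complex_eq_iff)
qed
lemma cinner_self_norm: "cinner x x = complex_of_real ((norm x)\<^sup>2)"
  using cinner_self_real[of x] norm_eq_sqrt_cinner[of x] cinner_ge_zero[of x] by simp
lemma Re_cinner_self: "Re (cinner x x) = (norm x)\<^sup>2"
  by (simp add: cinner_self_norm)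

lemma norm_scaleC: "norm (c *\<^sub>C (x::'a::complex_inner)) = cmod c * norm x"
proof -
  have 1: "cinner (c *\<^sub>C x) (c *\<^sub>C x) = (cnj c * c) * cinner x x"
    by (simp add: cinner_scaleC_left cinner_scaleC_right mult.assoc)
  have 2: "cnj c * c = complex_of_real ((cmod c)\<^sup>2)" by (simp only: complex_norm_square mult.commute)
  have "(norm (c *\<^sub>C x))\<^sup>2 = Re (cinner (c *\<^sub>C x) (c *\<^sub>C x))" by (simp add: Re_cinner_self)
  also have "\<dots> = (cmod c)\<^sup>2 * (norm x)\<^sup>2" unfolding 1 2 cinner_self_norm[of x]
    by (simp only: of_real_mult[symmetric] Re_complex_of_real)
  finally have "(norm (c *\<^sub>C x))\<^sup>2 = (cmod c * norm x)\<^sup>2" by (simp add: power_mult_distrib)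
  thus ?thesis by (simp add: power2_eq_iff_nonneg)
qed

lemma cauchy_schwarz: "cmod (cinner x y) \<le> norm x * norm y"
proof (cases "x = 0")
  case True thus ?thesis by simp
next
  case False
  define t where "t = cinner x y / cinner x x"
  have xx: "cinner x x = complex_of_real ((norm x)\<^sup>2)" by (rule cinner_self_norm)
  have nx: "norm x > 0" using False by simp
  have "0 \<le> Re (cinner (y - t *\<^sub>C x) (y - t *\<^sub>C x))" by (rule cinner_ge_zero)
  also have "cinner (y - t *\<^sub>C x) (y - t *\<^sub>C x) =
      cinner y y - t * cinner y x - cnj t * cinner x y + cnj t * t * cinner x x"
    by (simp add: cinner_diff_left cinner_diff_right cinner_scaleC_left cinner_scaleC_right algebra_simps)
  also have "cnj t * t * cinner x x = cnj t * cinner x y"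
  proof -
    have tx: "t * cinner x x = cinner x y" using False by (simp add: t_def cinner_eq_zero_iff)
    show ?thesis by (simp add: mult.assoc tx)
  qed
  also have "t * cinner y x = (cmod (cinner x y))\<^sup>2 / (norm x)\<^sup>2"
  proof -
    have "cinner y x = cnj (cinner x y)" by (rule cinner_commute)
    hence "t * cinner y x = cinner x y * cnj (cinner x y) / complex_of_real ((norm x)\<^sup>2)"
      by (simp add: t_def xx)
    thus ?thesis by (simp only: complex_norm_square[symmetric] of_real_divide of_real_power)
  qed
  finally have "0 \<le> (norm y)\<^sup>2 - (cmod (cinner x y))\<^sup>2 / (norm x)\<^sup>2"
    by (simp add: Re_cinner_self)
  hence "(cmod (cinner x y))\<^sup>2 \<le> (norm x)\<^sup>2 * (norm y)\<^sup>2" using nx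
    by (simp add: field_simps)
  hence "(cmod (cinner x y))\<^sup>2 \<le> (norm x * norm y)\<^sup>2" by (simp add: power_mult_distrib)
  thus ?thesis by (rule power2_le_imp_le) simp
qed

lemma bounded_bilinear_cinner: "bounded_bilinear cinner"
proof
  fix a a' b b' :: 'a and r :: real
  show "cinner (a + a') b = cinner a b + cinner a' b" by (rule cinner_add_left)
  show "cinner a (b + b') = cinner a b + cinner a b'" by (rule cinner_add_right)
  show "cinner (r *\<^sub>R a) b = r *\<^sub>R cinner a b"
    by (simp add: scaleR_scaleC cinner_scaleC_left scaleR_conv_of_real)
  show "cinner a (r *\<^sub>R b) = r *\<^sub>R cinner a b"
    by (simp add: scaleR_scaleC cinner_scaleC_right scaleR_conv_of_real)
  show "\<exists>K. \<forall>a b. norm (cinner a b) \<le> norm a * norm b * K"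
    by (rule exI[of _ 1]) (simp add: cauchy_schwarz)
qed

lemma pythagoras: "cinner x y = 0 \<Longrightarrow> (norm (x + y))\<^sup>2 = (norm x)\<^sup>2 + (norm y)\<^sup>2"
proof -
  assume o: "cinner x y = 0"
  hence o2: "cinner y x = 0" by (metis cinner_commute complex_cnj_zero)
  have "(norm (x + y))\<^sup>2 = Re (cinner (x+y) (x+y))" by (simp add: Re_cinner_self)
  also have "\<dots> = Re (cinner x x) + Re (cinner y y)"
    by (simp add: cinner_add_left cinner_add_right o o2)
  finally show ?thesis by (simp add: Re_cinner_self)
qed

lemma cinner_eq_zero_all: "(\<And>z. cinner z x = 0) \<Longrightarrow> x = 0"
  using cinner_eq_zero_iff by blast



lemma clinear_add: "clinear f \<Longrightarrow> f (x + y) = f x + f y" by (simp add: clinear_def)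
lemma clinear_scaleC: "clinear f \<Longrightarrow> f (c *\<^sub>C x) = c *\<^sub>C f x" by (simp add: clinear_def)
lemma clinear_zero: "clinear f \<Longrightarrow> f 0 = 0"
  using clinear_scaleC[of f 0 0] by simp
lemma clinear_minus: "clinear f \<Longrightarrow> f (- x) = - f x"
  using clinear_scaleC[of f "-1" x] by (simp add: scaleC_minus1)
lemma clinear_diff: "clinear f \<Longrightarrow> f (x - y) = f x - f y"
  by (simp only: diff_conv_add_uminus clinear_add clinear_minus)
lemma clinear_sum: "clinear f \<Longrightarrow> f (\<Sum>i\<in>I. g i) = (\<Sum>i\<in>I. f (g i))"
  by (induction I rule: infinite_finite_induct) (auto simp: clinear_add clinear_zero)
lemma clinear_real: "clinear f \<Longrightarrow> linear f"
  unfolding linear_iff by (simp add: clinear_add clinear_scaleC scaleR_scaleC)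

lemma bclin_clinear: "bounded_clinear f \<Longrightarrow> clinear f" by (simp add: bounded_clinear_def)
lemma bclin_linear: "bounded_clinear f \<Longrightarrow> bounded_linear f"
proof -
  assume a: "bounded_clinear f"
  then obtain K where K: "\<And>x. norm (f x) \<le> norm x * K" unfolding bounded_clinear_def by blast
  have l: "clinear f" using a by (simp add: bounded_clinear_def)
  show ?thesis
    by (rule bounded_linear_intro[of f K]) (simp_all add: K clinear_add[OF l] clinear_scaleC[OF l] scaleR_scaleC)
qed

lemma bclin_intro: "clinear f \<Longrightarrow> (\<And>x. norm (f x) \<le> norm x * K) \<Longrightarrow> bounded_clinear f"
  unfolding bounded_clinear_def by blast

lemma bclin_onorm: "bounded_clinear f \<Longrightarrow> norm (f x) \<le> onorm f * norm x"
  by (rule onorm[OF bclin_linear])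
lemma bclin_onorm_nonneg: "bounded_clinear f \<Longrightarrow> 0 \<le> onorm f"
  by (rule onorm_pos_le[OF bclin_linear])

lemma clinear_intro: "(\<And>x y. f (x + y) = f x + f y) \<Longrightarrow> (\<And>c x. f (c *\<^sub>C x) = c *\<^sub>C f x) \<Longrightarrow> clinear f"
  by (simp add: clinear_def)

lemma bclin_zero: "bounded_clinear (\<lambda>x. 0)"
  by (rule bclin_intro[where K=0]) (auto intro: clinear_intro)
lemma bclin_id: "bounded_clinear (\<lambda>x. x)"
  by (rule bclin_intro[where K=1]) (auto intro: clinear_intro)

lemma bclin_add: "bounded_clinear f \<Longrightarrow> bounded_clinear g \<Longrightarrow> bounded_clinear (\<lambda>x. f x + g x)"
proof -
  assume f: "bounded_clinear f" and g: "bounded_clinear g"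
  show ?thesis
  proof (rule bclin_intro[where K="onorm f + onorm g"])
    show "clinear (\<lambda>x. f x + g x)"
      using bclin_clinear[OF f] bclin_clinear[OF g]
      by (intro clinear_intro) (simp_all add: clinear_add clinear_scaleC scaleC_add_right algebra_simps)
    fix x
    have "norm (f x + g x) \<le> norm (f x) + norm (g x)" by (rule norm_triangle_ineq)
    also have "\<dots> \<le> onorm f * norm x + onorm g * norm x"
      using bclin_onorm[OF f] bclin_onorm[OF g] by (intro add_mono)
    finally show "norm (f x + g x) \<le> norm x * (onorm f + onorm g)" by (simp add: algebra_simps)
  qed
qed

lemma bclin_scale: "bounded_clinear (f::'a::complex_inner \<Rightarrow> 'b::complex_inner) \<Longrightarrow> bounded_clinear (\<lambda>x. c *\<^sub>C f x)"
proof -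
  assume f: "bounded_clinear f"
  show ?thesis
  proof (rule bclin_intro[where K="cmod c * onorm f"])
    show "clinear (\<lambda>x. c *\<^sub>C f x)"
      using bclin_clinear[OF f]
      by (intro clinear_intro) (simp_all add: clinear_add clinear_scaleC scaleC_add_right scaleC_scaleC mult.commute)
    fix x
    have "cmod c * norm (f x) \<le> cmod c * (onorm f * norm x)"
      by (rule mult_left_mono[OF bclin_onorm[OF f]]) simp
    thus "norm (c *\<^sub>C f x) \<le> norm x * (cmod c * onorm f)"
      by (simp add: norm_scaleC algebra_simps)
  qed
qed

lemma bclin_minus: "bounded_clinear (f::'a::complex_inner \<Rightarrow> 'b::complex_inner) \<Longrightarrow> bounded_clinear (\<lambda>x. - f x)"
  using bclin_scale[of f "-1"] by (simp add: scaleC_minus1)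

lemma bclin_diff: "bounded_clinear (f::'a::complex_inner \<Rightarrow> 'b::complex_inner) \<Longrightarrow> bounded_clinear g \<Longrightarrow> bounded_clinear (\<lambda>x. f x - g x)"
  using bclin_add[of f "\<lambda>x. - g x"] bclin_minus[of g] by simp

lemma bclin_comp: "bounded_clinear f \<Longrightarrow> bounded_clinear g \<Longrightarrow> bounded_clinear (\<lambda>x. f (g x))"
proof -
  assume f: "bounded_clinear f" and g: "bounded_clinear g"
  show ?thesis
  proof (rule bclin_intro[where K="onorm f * onorm g"])
    show "clinear (\<lambda>x. f (g x))"
      using bclin_clinear[OF f] bclin_clinear[OF g]
      by (intro clinear_intro) (simp_all add: clinear_add clinear_scaleC)
    fix x
    have "norm (f (g x)) \<le> onorm f * norm (g x)" by (rule bclin_onorm[OF f])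
    also have "\<dots> \<le> onorm f * (onorm g * norm x)"
      by (intro mult_left_mono bclin_onorm[OF g] bclin_onorm_nonneg[OF f])
    finally show "norm (f (g x)) \<le> norm x * (onorm f * onorm g)" by (simp add: algebra_simps)
  qed
qed

lemma bclin_sum: "finite K \<Longrightarrow> (\<And>k. k \<in> K \<Longrightarrow> bounded_clinear (F k)) \<Longrightarrow>
    bounded_clinear (\<lambda>x. \<Sum>k\<in>K. F k x)"
proof (induction K rule: finite_induct)
  case empty thus ?case by (simp add: bclin_zero)
next
  case (insert a K) thus ?case by (simp add: bclin_add)
qed

lemma onorm_comp_le: "bounded_clinear f \<Longrightarrow> bounded_clinear g \<Longrightarrow>
    onorm (\<lambda>x. f (g x)) \<le> onorm f * onorm g"
  using onorm_compose[OF bclin_linear bclin_linear, of f g] by (simp add: o_def)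

lemma onorm_comp3_le: "bounded_clinear f \<Longrightarrow> bounded_clinear g \<Longrightarrow> bounded_clinear h \<Longrightarrow>
    onorm (\<lambda>x. f (g (h x))) \<le> onorm f * onorm g * onorm h"
proof -
  assume f: "bounded_clinear f" and g: "bounded_clinear g" and h: "bounded_clinear h"
  have "onorm (\<lambda>x. f (g (h x))) \<le> onorm f * onorm (\<lambda>x. g (h x))"
    by (rule onorm_comp_le[OF f bclin_comp[OF g h]])
  also have "\<dots> \<le> onorm f * (onorm g * onorm h)"
    by (intro mult_left_mono onorm_comp_le[OF g h] bclin_onorm_nonneg[OF f])
  finally show ?thesis by (simp add: mult.assoc)
qed

lemma onorm_bound': "0 \<le> b \<Longrightarrow> (\<And>x. norm (f x) \<le> b * norm x) \<Longrightarrow> onorm f \<le> b"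
  by (rule onorm_bound)

lemma cspan_zero: "0 \<in> cspan V"
  unfolding cspan_def by (rule CollectI, rule exI[of _ "{}"]) auto

lemma cspan_superset: "v \<in> V \<Longrightarrow> v \<in> cspan V"
  unfolding cspan_def by (rule CollectI, rule exI[of _ "{v}"], rule exI[of _ "\<lambda>_. 1"]) (simp add: scaleC_one)

lemma cspan_add: assumes "x \<in> cspan V" "y \<in> cspan V" shows "x + y \<in> cspan V"
proof -
  obtain W1 c1 where 1: "finite W1" "W1 \<subseteq> V" "x = (\<Sum>v\<in>W1. c1 v *\<^sub>C v)" using assms(1) unfolding cspan_def by blast
  obtain W2 c2 where 2: "finite W2" "W2 \<subseteq> V" "y = (\<Sum>v\<in>W2. c2 v *\<^sub>C v)" using assms(2) unfolding cspan_def by blast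
  define c where "c v = (if v \<in> W1 then c1 v else 0) + (if v \<in> W2 then c2 v else 0)" for v
  have "(\<Sum>v\<in>W1 \<union> W2. (if v \<in> W1 then c1 v else 0) *\<^sub>C v) = (\<Sum>v\<in>W1. (if v \<in> W1 then c1 v else 0) *\<^sub>C v)"
    using 1 2 by (intro sum.mono_neutral_right) auto
  hence "x = (\<Sum>v\<in>W1 \<union> W2. (if v \<in> W1 then c1 v else 0) *\<^sub>C v)" using 1 by simp
  moreover
  have "(\<Sum>v\<in>W1 \<union> W2. (if v \<in> W2 then c2 v else 0) *\<^sub>C v) = (\<Sum>v\<in>W2. (if v \<in> W2 then c2 v else 0) *\<^sub>C v)"
    using 1 2 by (intro sum.mono_neutral_right) auto
  hence "y = (\<Sum>v\<in>W1 \<union> W2. (if v \<in> W2 then c2 v else 0) *\<^sub>C v)" using 2 by simp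
  ultimately have e: "x + y = (\<Sum>v\<in>W1 \<union> W2. c v *\<^sub>C v)"
    by (simp add: c_def scaleC_add_left sum.distrib)
  have "finite (W1 \<union> W2)" "W1 \<union> W2 \<subseteq> V" using 1 2 by auto
  thus ?thesis unfolding cspan_def
    by (intro CollectI exI[of _ "W1 \<union> W2"] exI[of _ c]) (simp only: e simp_thms)
qed

lemma cspan_scale: assumes "x \<in> cspan V" shows "a *\<^sub>C x \<in> cspan V"
proof -
  obtain W c where 1: "finite W" "W \<subseteq> V" "x = (\<Sum>v\<in>W. c v *\<^sub>C v)" using assms unfolding cspan_def by blast
  have e: "a *\<^sub>C x = (\<Sum>v\<in>W. (a * c v) *\<^sub>C v)" unfolding 1(3) scaleC_sum_right scaleC_scaleC ..
  show ?thesis unfolding cspan_def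
    by (rule CollectI, rule exI[of _ W], rule exI[of _ "\<lambda>v. a * c v"]) (simp only: e 1(1,2) simp_thms)
qed

lemma cspan_sum: "(\<And>i. i \<in> I \<Longrightarrow> g i \<in> cspan V) \<Longrightarrow> (\<Sum>i\<in>I. g i) \<in> cspan V"
  by (induction I rule: infinite_finite_induct) (auto simp: cspan_zero cspan_add)

lemma cspan_minimal: assumes "V \<subseteq> cspan U" shows "cspan V \<subseteq> cspan U"
proof
  fix x assume "x \<in> cspan V"
  then obtain W c where 1: "finite W" "W \<subseteq> V" "x = (\<Sum>v\<in>W. c v *\<^sub>C v)" unfolding cspan_def by blast
  show "x \<in> cspan U" unfolding 1(3) using 1 assms by (intro cspan_sum cspan_scale) auto
qed

lemma cspan_mono: "V \<subseteq> U \<Longrightarrow> cspan V \<subseteq> cspan U"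
  by (rule cspan_minimal) (auto intro: cspan_superset)

lemma cspan_image: assumes "clinear S" "x \<in> cspan V" shows "S x \<in> cspan (S ` V)"
proof -
  obtain W c where 1: "finite W" "W \<subseteq> V" "x = (\<Sum>v\<in>W. c v *\<^sub>C v)" using assms(2) unfolding cspan_def by blast
  have "S x = (\<Sum>v\<in>W. c v *\<^sub>C S v)" using assms(1) by (simp add: 1 clinear_sum clinear_scaleC)
  also have "\<dots> \<in> cspan (S ` V)" using 1 by (intro cspan_sum cspan_scale cspan_superset) auto
  finally show ?thesis .
qed

lemma crank_lt_iff: "crank F < enat n \<longleftrightarrow> (\<exists>V. finite V \<and> range F \<subseteq> cspan V \<and> card V < n)"
  unfolding crank_def by (simp add: INF_less_iff)

lemma crank_zero: "crank (\<lambda>x. 0) < enat (Suc n)"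
  unfolding crank_lt_iff by (rule exI[of _ "{}"]) (auto simp: cspan_zero)

lemma crank_comp: assumes "clinear S" "crank F < enat n" shows "crank (\<lambda>x. S (F (U x))) < enat n"
proof -
  obtain V where V: "finite V" "range F \<subseteq> cspan V" "card V < n" using assms(2) unfolding crank_lt_iff by blast
  have "range (\<lambda>x. S (F (U x))) \<subseteq> cspan (S ` V)" using V(2) cspan_image[OF assms(1)] by blast
  moreover have "card (S ` V) < n" using V card_image_le[of V S] by linarith
  ultimately show ?thesis unfolding crank_lt_iff using V(1) by blast
qed

lemma crank_sum:
  assumes "finite K" "\<And>k. k \<in> K \<Longrightarrow> crank (F k) < enat (Suc n)"
  shows "crank (\<lambda>x. \<Sum>k\<in>K. F k x) < enat (Suc (card K * n))"
  using assms
proof (induction K rule: finite_induct)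
  case empty thus ?case by (simp add: crank_zero)
next
  case (insert a K)
  obtain V1 where V1: "finite V1" "range (\<lambda>x. \<Sum>k\<in>K. F k x) \<subseteq> cspan V1" "card V1 < Suc (card K * n)"
    using insert unfolding crank_lt_iff by auto
  obtain V2 where V2: "finite V2" "range (F a) \<subseteq> cspan V2" "card V2 < Suc n"
    using insert(4)[of a] unfolding crank_lt_iff by auto
  have "range (\<lambda>x. \<Sum>k\<in>insert a K. F k x) \<subseteq> cspan (V1 \<union> V2)"
  proof
    fix y assume "y \<in> range (\<lambda>x. \<Sum>k\<in>insert a K. F k x)"
    then obtain x where y: "y = F a x + (\<Sum>k\<in>K. F k x)" using insert by auto
    have "F a x \<in> cspan (V1 \<union> V2)" using V2(2) cspan_mono[of V2 "V1 \<union> V2"] by blast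
    moreover have "(\<Sum>k\<in>K. F k x) \<in> cspan (V1 \<union> V2)" using V1(2) cspan_mono[of V1 "V1 \<union> V2"] by blast
    ultimately show "y \<in> cspan (V1 \<union> V2)" unfolding y by (rule cspan_add)
  qed
  moreover have "card (V1 \<union> V2) < Suc (card (insert a K) * n)"
    using card_Un_le[of V1 V2] V1(3) V2(3) insert(1,2) by simp
  ultimately show ?case unfolding crank_lt_iff using V1(1) V2(1) by blast
qed


lemma eps_le:
  fixes a s K :: real
  assumes "\<And>e. e > 0 \<Longrightarrow> a \<le> s + K * e"
  shows "a \<le> s"
proof (rule field_le_epsilon)
  fix e :: real assume e: "e > 0"
  define d where "d = e / (\<bar>K\<bar> + 1)"
  have d: "d > 0" using e by (simp add: d_def)
  have "K * d \<le> \<bar>K\<bar> * d" using d by (simp add: mult_right_mono)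
  also have "\<dots> \<le> e" using e by (simp add: d_def field_simps)
  finally have "K * d \<le> e" .
  thus "a \<le> s + e" using assms[OF d] by linarith
qed

definition aset where
  "aset n T = {onorm (\<lambda>x. T x - F x) | F. bounded_clinear F \<and> crank F < enat n}"

lemma approx_num_aset: "approx_num n T = Inf (aset n T)"
  by (simp add: approx_num_def aset_def)

lemma aset_nonempty: "n \<ge> 1 \<Longrightarrow> onorm T \<in> aset n (T::'a::complex_inner \<Rightarrow> 'b::complex_inner)"
proof -
  assume n: "n \<ge> 1"
  then obtain m where m: "n = Suc m" by (cases n) auto
  show ?thesis unfolding aset_def using bclin_zero crank_zero[of m] m by force
qed

lemma aset_bdd: "bounded_clinear (T::'a::complex_inner \<Rightarrow> 'b::complex_inner) \<Longrightarrow> bdd_below (aset n T)"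
  unfolding aset_def bdd_below_def
  by (rule exI[of _ 0]) (auto intro!: bclin_onorm_nonneg bclin_diff)

lemma approx_num_nonneg: "bounded_clinear (T::'a::complex_inner \<Rightarrow> 'b::complex_inner) \<Longrightarrow> n \<ge> 1 \<Longrightarrow> 0 \<le> approx_num n T"
  unfolding approx_num_aset
proof (rule cInf_greatest)
  assume "bounded_clinear T" "n \<ge> 1"
  thus "aset n T \<noteq> {}" using aset_nonempty[of n T] by blast
  fix x assume "x \<in> aset n T"
  thus "0 \<le> x" using \<open>bounded_clinear T\<close> unfolding aset_def by (auto intro!: bclin_onorm_nonneg bclin_diff)
qed

lemma approx_num_le: "bounded_clinear (T::'a::complex_inner \<Rightarrow> 'b::complex_inner) \<Longrightarrow> bounded_clinear F \<Longrightarrow>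
    crank F < enat n \<Longrightarrow> approx_num n T \<le> onorm (\<lambda>x. T x - F x)"
  unfolding approx_num_aset by (rule cInf_lower) (auto simp: aset_def aset_bdd[unfolded aset_def])

lemma approx_num_le_onorm: "bounded_clinear (T::'a::complex_inner \<Rightarrow> 'b::complex_inner) \<Longrightarrow> n \<ge> 1 \<Longrightarrow>
   approx_num n T \<le> onorm T"
  unfolding approx_num_aset by (rule cInf_lower[OF aset_nonempty aset_bdd])

lemma approx_num_lt:
  assumes "bounded_clinear (T::'a::complex_inner \<Rightarrow> 'b::complex_inner)" "n \<ge> 1" "approx_num n T < b"
  shows "\<exists>F. bounded_clinear F \<and> crank F < enat n \<and> onorm (\<lambda>x. T x - F x) < b"
proof -
  have "\<exists>y\<in>aset n T. y < b" using assms(3) unfolding approx_num_aset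
    by (intro cInf_lessD) (use aset_nonempty[OF assms(2)] in blast)+
  thus ?thesis unfolding aset_def by blast
qed

lemma approx_num_mono:
  assumes "bounded_clinear (T::'a::complex_inner \<Rightarrow> 'b::complex_inner)" "1 \<le> n" "n \<le> n'"
  shows "approx_num n' T \<le> approx_num n T"
  unfolding approx_num_aset
proof (rule cInf_superset_mono)
  show "aset n T \<noteq> {}" using aset_nonempty[OF assms(2)] by blast
  show "bdd_below (aset n' T)" by (rule aset_bdd[OF assms(1)])
  show "aset n T \<subseteq> aset n' T"
  proof
    fix y assume "y \<in> aset n T"
    then obtain F where F: "y = onorm (\<lambda>x. T x - F x)" "bounded_clinear F" "crank F < enat n"
      unfolding aset_def by blast
    have "enat n \<le> enat n'" using assms(3) by simp
    hence "crank F < enat n'" using F(3) by (rule less_le_trans[rotated])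
    thus "y \<in> aset n' T" unfolding aset_def using F by blast
  qed
qed

lemma approx_num_comp:
  fixes S :: "'b::complex_inner \<Rightarrow> 'c::complex_inner" and T :: "'a::complex_inner \<Rightarrow> 'b"
    and U :: "'d::complex_inner \<Rightarrow> 'a"
  assumes S: "bounded_clinear S" and T: "bounded_clinear T" and U: "bounded_clinear U" and N: "N \<ge> 1"
  shows "approx_num N (\<lambda>x. S (T (U x))) \<le> onorm S * approx_num N T * onorm U"
proof -
  define K where "K = onorm S * onorm U"
  have K: "K \<ge> 0" unfolding K_def using bclin_onorm_nonneg[OF S] bclin_onorm_nonneg[OF U] by simp
  have "approx_num N (\<lambda>x. S (T (U x))) \<le> K * approx_num N T + K * e" if e: "e > 0" for e
  proof -
    have "approx_num N T < approx_num N T + e" using e by linarith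
    from approx_num_lt[OF T N this]
    obtain F where F: "bounded_clinear F" "crank F < enat N" "onorm (\<lambda>x. T x - F x) < approx_num N T + e"
      by blast
    have G: "bounded_clinear (\<lambda>x. S (F (U x)))" by (rule bclin_comp[OF S bclin_comp[OF F(1) U]])
    have "approx_num N (\<lambda>x. S (T (U x))) \<le> onorm (\<lambda>x. S (T (U x)) - S (F (U x)))"
      by (rule approx_num_le[OF _ G crank_comp[OF bclin_clinear[OF S] F(2)]]) (rule bclin_comp[OF S bclin_comp[OF T U]])
    also have "(\<lambda>x. S (T (U x)) - S (F (U x))) = (\<lambda>x. S ((\<lambda>y. T y - F y) (U x)))"
      by (simp add: clinear_diff[OF bclin_clinear[OF S]])
    also have "onorm \<dots> \<le> onorm S * onorm (\<lambda>y. T y - F y) * onorm U"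
      by (rule onorm_comp3_le[OF S bclin_diff[OF T F(1)] U])
    also have "\<dots> \<le> onorm S * (approx_num N T + e) * onorm U"
      by (intro mult_right_mono mult_left_mono bclin_onorm_nonneg S U less_imp_le[OF F(3)])
    also have "\<dots> = K * approx_num N T + K * e" by (simp add: K_def algebra_simps)
    finally show ?thesis .
  qed
  hence "approx_num N (\<lambda>x. S (T (U x))) \<le> K * approx_num N T" by (rule eps_le[where K=K]) simp
  thus ?thesis by (simp add: K_def algebra_simps)
qed

lemma approx_num_sum:
  fixes T :: "nat \<Rightarrow> 'a::complex_inner \<Rightarrow> 'b::complex_inner"
  assumes T: "\<And>k. k < r \<Longrightarrow> bounded_clinear (T k)" and n: "n \<ge> 1"
  shows "approx_num (r * n - r + 1) (\<lambda>x. \<Sum>k<r. T k x) \<le> (\<Sum>k<r. approx_num n (T k))"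
proof -
  have "approx_num (r * n - r + 1) (\<lambda>x. \<Sum>k<r. T k x) \<le> (\<Sum>k<r. approx_num n (T k)) + real r * e"
    if e: "e > 0" for e
  proof -
    have "\<forall>k. \<exists>F. k < r \<longrightarrow> bounded_clinear F \<and> crank F < enat n \<and> onorm (\<lambda>x. T k x - F x) < approx_num n (T k) + e"
    proof (intro allI)
      fix k
      have "approx_num n (T k) < approx_num n (T k) + e" using e by linarith
      thus "\<exists>F. k < r \<longrightarrow> bounded_clinear F \<and> crank F < enat n \<and> onorm (\<lambda>x. T k x - F x) < approx_num n (T k) + e"
        using approx_num_lt[OF T n] by blast
    qed
    then obtain F where F: "\<And>k. k < r \<Longrightarrow> bounded_clinear (F k) \<and> crank (F k) < enat n \<and>
        onorm (\<lambda>x. T k x - F k x) < approx_num n (T k) + e" by metis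
    obtain m where m: "n = Suc m" using n by (cases n) auto
    have G: "bounded_clinear (\<lambda>x. \<Sum>k<r. F k x)" using F by (intro bclin_sum) auto
    have cr: "crank (\<lambda>x. \<Sum>k\<in>{..<r}. F k x) < enat (Suc (card {..<r} * m))"
      using F m by (intro crank_sum) auto
    have "Suc (card {..<r} * m) = r * n - r + 1" using m by (simp add: algebra_simps)
    hence cr': "crank (\<lambda>x. \<Sum>k<r. F k x) < enat (r * n - r + 1)" using cr by simp
    have "approx_num (r * n - r + 1) (\<lambda>x. \<Sum>k<r. T k x) \<le> onorm (\<lambda>x. (\<Sum>k<r. T k x) - (\<Sum>k<r. F k x))"
      by (rule approx_num_le[OF _ G cr']) (intro bclin_sum T, auto)
    also have "(\<lambda>x. (\<Sum>k<r. T k x) - (\<Sum>k<r. F k x)) = (\<lambda>x. \<Sum>k<r. T k x - F k x)"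
      by (simp add: sum_subtractf)
    also have "onorm \<dots> \<le> (\<Sum>k<r. onorm (\<lambda>x. T k x - F k x))"
      by (rule onorm_sum) (auto intro!: bclin_linear bclin_diff T F[THEN conjunct1])
    also have "\<dots> \<le> (\<Sum>k<r. approx_num n (T k) + e)"
      by (intro sum_mono less_imp_le) (use F in auto)
    also have "\<dots> = (\<Sum>k<r. approx_num n (T k)) + real r * e" by (simp add: sum.distrib)
    finally show ?thesis .
  qed
  thus ?thesis by (rule eps_le[where K="real r"]) simp
qed


subclass (in chilbert_space) banach ..

definition ofam :: "(nat \<Rightarrow> 'a::complex_inner) \<Rightarrow> bool" where
  "ofam E \<longleftrightarrow> (\<forall>n m. n \<noteq> m \<longrightarrow> cinner (E n) (E m) = 0) \<and> (\<forall>n. E n \<noteq> 0 \<longrightarrow> norm (E n) = 1)"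

lemma ofam_cinner: "ofam E \<Longrightarrow> cinner (E k) (E n) = (if k = n \<and> E n \<noteq> 0 then 1 else 0)"
proof -
  assume o: "ofam E"
  show ?thesis
  proof (cases "k = n")
    case True
    show ?thesis
    proof (cases "E n = 0")
      case False
      hence "norm (E n) = 1" using o unfolding ofam_def by blast
      thus ?thesis using True False by (simp add: cinner_self_norm)
    qed (use True in simp)
  next
    case False thus ?thesis using o unfolding ofam_def by simp
  qed
qed

definition ind :: "'a::zero \<Rightarrow> real" where "ind x = (if x = 0 then 0 else 1)"

lemma ind_le1: "ind x \<le> 1" and ind_ge0: "0 \<le> ind x" by (simp_all add: ind_def)

lemma ofam_cinner_sum:
  assumes "ofam E" "finite A"
  shows "cinner (E k) (\<Sum>n\<in>A. c n *\<^sub>C E n) = (if k \<in> A \<and> E k \<noteq> 0 then c k else 0)"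
proof -
  have "cinner (E k) (\<Sum>n\<in>A. c n *\<^sub>C E n) = (\<Sum>n\<in>A. c n * cinner (E k) (E n))"
    by (simp add: cinner_sum_right cinner_scaleC_right)
  also have "\<dots> = (\<Sum>n\<in>A. (if n = k then (if E k \<noteq> 0 then c k else 0) else 0))"
    by (intro sum.cong refl) (auto simp: ofam_cinner[OF assms(1)])
  also have "\<dots> = (if k \<in> A \<and> E k \<noteq> 0 then c k else 0)"
    using assms(2) by (simp add: sum.delta')
  finally show ?thesis .
qed

lemma ofam_norm_sum:
  assumes "ofam E" "finite A"
  shows "(norm (\<Sum>n\<in>A. c n *\<^sub>C E n))\<^sup>2 = (\<Sum>n\<in>A. (cmod (c n))\<^sup>2 * ind (E n))"
proof -
  define s where "s = (\<Sum>n\<in>A. c n *\<^sub>C E n)"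
  have "cinner s s = (\<Sum>k\<in>A. cnj (c k) * cinner (E k) s)"
    by (simp add: s_def[of] cinner_sum_left cinner_scaleC_left)
  also have "\<dots> = (\<Sum>k\<in>A. cnj (c k) * (if E k \<noteq> 0 then c k else 0))"
    by (intro sum.cong refl) (simp add: s_def ofam_cinner_sum[OF assms])
  also have "\<dots> = (\<Sum>k\<in>A. complex_of_real ((cmod (c k))\<^sup>2 * ind (E k)))"
    by (intro sum.cong refl) (simp add: ind_def complex_norm_square mult.commute del: of_real_power)
  finally have "cinner s s = complex_of_real (\<Sum>k\<in>A. (cmod (c k))\<^sup>2 * ind (E k))" by simp
  thus ?thesis unfolding s_def[symmetric] by (simp only: cinner_self_norm of_real_eq_iff)
qed

lemma sq_le_cancel:
  fixes S a :: real
  assumes "0 \<le> S" "S * S \<le> a * S" "0 \<le> a" shows "S \<le> a"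
proof (cases "S = 0")
  case True
  thus ?thesis using assms(3) by simp
next
  case False
  hence "S > 0" using assms(1) by simp
  thus ?thesis using assms(2) by (simp add: mult_le_cancel_right)
qed

lemma coef_bound:
  fixes X :: "'a::complex_inner \<Rightarrow> 'b::complex_inner"
  assumes X: "bounded_clinear X" and o: "ofam E"
  shows "(\<Sum>n<N. (cmod (cinner z (X (E n))))\<^sup>2) \<le> (onorm X * norm z)\<^sup>2"
proof -
  define c where "c n = cinner z (X (E n))" for n
  define S where "S = (\<Sum>n<N. (cmod (c n))\<^sup>2)"
  define p where "p = (\<Sum>n<N. cnj (c n) *\<^sub>C E n)"
  have S0: "0 \<le> S" unfolding S_def by (simp add: sum_nonneg)
  have "cinner z (X p) = (\<Sum>n<N. cnj (c n) * c n)"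
    unfolding p_def using bclin_clinear[OF X]
    by (simp add: clinear_sum clinear_scaleC cinner_sum_right cinner_scaleC_right c_def)
  also have "\<dots> = complex_of_real S" unfolding S_def
    by (simp add: complex_norm_square mult.commute del: of_real_power)
  finally have zp: "cinner z (X p) = complex_of_real S" .
  have "(norm p)\<^sup>2 = (\<Sum>n<N. (cmod (cnj (c n)))\<^sup>2 * ind (E n))"
    unfolding p_def by (rule ofam_norm_sum[OF o]) simp
  also have "\<dots> \<le> S" unfolding S_def
    by (intro sum_mono) (simp add: ind_le1 mult_left_le)
  finally have pS: "(norm p)\<^sup>2 \<le> S" .
  have "S = cmod (cinner z (X p))" using zp S0 by simp
  also have "\<dots> \<le> norm z * norm (X p)" by (rule cauchy_schwarz)
  also have "\<dots> \<le> norm z * (onorm X * norm p)"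
    by (intro mult_left_mono bclin_onorm[OF X]) simp
  finally have Sle: "S \<le> (norm z * onorm X) * norm p" by (simp add: mult.assoc)
  have a0: "0 \<le> norm z * onorm X" using bclin_onorm_nonneg[OF X] by simp
  have "S * S \<le> ((norm z * onorm X) * norm p)\<^sup>2"
    using Sle S0 by (simp add: power2_eq_square mult_mono)
  also have "\<dots> = (norm z * onorm X)\<^sup>2 * (norm p)\<^sup>2" by (simp add: power_mult_distrib)
  also have "\<dots> \<le> (norm z * onorm X)\<^sup>2 * S" by (rule mult_left_mono[OF pS zero_le_power2])
  finally have "S \<le> (norm z * onorm X)\<^sup>2" by (rule sq_le_cancel[OF S0]) simp
  thus ?thesis unfolding S_def c_def by (simp add: mult.commute)
qed

lemma bessel:
  assumes o: "ofam (E::nat \<Rightarrow> 'a::complex_inner)"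
  shows "(\<Sum>n<N. (cmod (cinner (E n) x))\<^sup>2) \<le> (norm x)\<^sup>2"
proof -
  have "(\<Sum>n<N. (cmod (cinner (E n) x))\<^sup>2) = (\<Sum>n<N. (cmod (cinner x ((\<lambda>y. y) (E n))))\<^sup>2)"
    by (intro sum.cong refl) (metis cinner_commute complex_mod_cnj)
  also have "\<dots> \<le> (onorm (\<lambda>y::'a. y) * norm x)\<^sup>2" by (rule coef_bound[OF bclin_id o])
  also have "\<dots> \<le> (norm x)\<^sup>2"
  proof -
    have o1: "onorm (\<lambda>y::'a. y) \<le> 1" by (rule onorm_id_le)
    have o0: "0 \<le> onorm (\<lambda>y::'a. y)" by (rule onorm_pos_le[OF bounded_linear_ident])
    show ?thesis by (rule power_mono) (simp_all add: mult_left_le_one_le o0 o1)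
  qed
  finally show ?thesis .
qed

lemma summable_sq_bound:
  fixes c :: "nat \<Rightarrow> complex"
  assumes "\<And>N. (\<Sum>n<N. (cmod (c n))\<^sup>2) \<le> B"
  shows "summable (\<lambda>n. (cmod (c n))\<^sup>2)" "(\<Sum>n. (cmod (c n))\<^sup>2) \<le> B"
proof -
  show s: "summable (\<lambda>n. (cmod (c n))\<^sup>2)"
    by (rule bounded_imp_summable[where B=B]) (use assms[of "Suc _"] in \<open>simp_all add: lessThan_Suc_atMost\<close>)
  show "(\<Sum>n. (cmod (c n))\<^sup>2) \<le> B" by (rule suminf_le_const[OF s assms])
qed

abbreviation sqs :: "(nat \<Rightarrow> complex) \<Rightarrow> bool" where
  "sqs c \<equiv> summable (\<lambda>n. (cmod (c n))\<^sup>2)"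

lemma sqs_bessel: "ofam E \<Longrightarrow> sqs (\<lambda>n. cinner (E n) x)"
  using summable_sq_bound(1)[OF bessel] by blast

lemma sqs_coef: "bounded_clinear X \<Longrightarrow> ofam E \<Longrightarrow> sqs (\<lambda>n. cinner z (X (E n)))"
  by (rule summable_sq_bound(1)[OF coef_bound])

lemma sqs_add: assumes "sqs c" "sqs d" shows "sqs (\<lambda>n. c n + d n)"
proof (rule summable_comparison_test[OF _ summable_add[OF summable_mult[OF assms(1), of 2] summable_mult[OF assms(2), of 2]]])
  show "\<exists>N. \<forall>n\<ge>N. norm ((cmod (c n + d n))\<^sup>2) \<le> 2 * (cmod (c n))\<^sup>2 + 2 * (cmod (d n))\<^sup>2"
  proof (intro exI allI impI)
    fix n
    have "cmod (c n + d n) \<le> cmod (c n) + cmod (d n)" by (rule norm_triangle_ineq)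
    hence "(cmod (c n + d n))\<^sup>2 \<le> (cmod (c n) + cmod (d n))\<^sup>2" by (intro power_mono) auto
    also have "\<dots> \<le> 2 * (cmod (c n))\<^sup>2 + 2 * (cmod (d n))\<^sup>2"
      using zero_le_power2[of "cmod (c n) - cmod (d n)"] unfolding power2_diff power2_sum by linarith
    finally show "norm ((cmod (c n + d n))\<^sup>2) \<le> 2 * (cmod (c n))\<^sup>2 + 2 * (cmod (d n))\<^sup>2" by simp
  qed
qed

lemma sqs_scale: "sqs c \<Longrightarrow> sqs (\<lambda>n. a * c n)"
  using summable_mult[of "\<lambda>n. (cmod (c n))\<^sup>2" "(cmod a)\<^sup>2"] by (simp add: norm_mult power_mult_distrib)

lemma sqs_sum: "(\<And>l. l \<in> L \<Longrightarrow> sqs (d l)) \<Longrightarrow> sqs (\<lambda>n. \<Sum>l\<in>L. d l n)"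
proof (induction L rule: infinite_finite_induct)
  case (insert a L) thus ?case by (simp add: sqs_add)
qed simp_all

definition ser :: "(nat \<Rightarrow> 'a::complex_inner) \<Rightarrow> (nat \<Rightarrow> complex) \<Rightarrow> 'a" where
  "ser E c = (\<Sum>n. c n *\<^sub>C E n)"

lemma ser_summable:
  fixes E :: "nat \<Rightarrow> 'a::chilbert_space"
  assumes o: "ofam E" and c: "sqs c"
  shows "summable (\<lambda>n. c n *\<^sub>C E n)"
  unfolding summable_Cauchy
proof (intro allI impI)
  fix e :: real assume e: "e > 0"
  obtain N where N: "\<And>m n. m \<ge> N \<Longrightarrow> norm (\<Sum>k\<in>{m..<n}. (cmod (c k))\<^sup>2) < e\<^sup>2"
    using c[unfolded summable_Cauchy] e by (meson zero_less_power)
  show "\<exists>N. \<forall>m\<ge>N. \<forall>n. norm (\<Sum>k\<in>{m..<n}. c k *\<^sub>C E k) < e"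
  proof (intro exI allI impI)
    fix m n assume m: "N \<le> m"
    have "(norm (\<Sum>k\<in>{m..<n}. c k *\<^sub>C E k))\<^sup>2 = (\<Sum>k\<in>{m..<n}. (cmod (c k))\<^sup>2 * ind (E k))"
      by (rule ofam_norm_sum[OF o]) simp
    also have "\<dots> \<le> (\<Sum>k\<in>{m..<n}. (cmod (c k))\<^sup>2)" by (intro sum_mono) (simp add: ind_le1 mult_left_le)
    also have "\<dots> < e\<^sup>2" using N[OF m, of n] by (simp add: sum_nonneg)
    finally show "norm (\<Sum>k\<in>{m..<n}. c k *\<^sub>C E k) < e" using e by (simp add: power_less_imp_less_base)
  qed
qed

lemma ser_sums: "ofam (E::nat \<Rightarrow> 'a::chilbert_space) \<Longrightarrow> sqs c \<Longrightarrow> (\<lambda>n. c n *\<^sub>C E n) sums ser E c"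
  unfolding ser_def by (rule summable_sums[OF ser_summable])

lemma bl_cinner_right: "bounded_linear (\<lambda>y. cinner x y)"
  by (rule bounded_bilinear.bounded_linear_right[OF bounded_bilinear_cinner])

lemma bl_scaleC: "bounded_linear (\<lambda>y::'a::complex_inner. a *\<^sub>C y)"
  by (rule bclin_linear[OF bclin_scale[OF bclin_id]])

lemma ser_cinner:
  fixes E :: "nat \<Rightarrow> 'a::chilbert_space"
  assumes o: "ofam E" and c: "sqs c"
  shows "cinner (E k) (ser E c) = (if E k = 0 then 0 else c k)"
proof -
  have 1: "(\<lambda>n. cinner (E k) (c n *\<^sub>C E n)) sums cinner (E k) (ser E c)"
    by (rule bounded_linear.sums[OF bl_cinner_right ser_sums[OF o c]])
  have eq: "(\<lambda>n. cinner (E k) (c n *\<^sub>C E n)) = (\<lambda>n. if n = k then (if E k = 0 then 0 else c n) else 0)"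
    by (rule ext) (simp add: cinner_scaleC_right ofam_cinner[OF o])
  have 2: "(\<lambda>n. cinner (E k) (c n *\<^sub>C E n)) sums (if E k = 0 then 0 else c k)"
    unfolding eq using sums_single[of k "\<lambda>n. if E k = 0 then 0 else c n"] by simp
  show ?thesis by (rule sums_unique2[OF 1 2])
qed

lemma ser_norm:
  fixes E :: "nat \<Rightarrow> 'a::chilbert_space"
  assumes o: "ofam E" and c: "sqs c"
  shows "(norm (ser E c))\<^sup>2 \<le> (\<Sum>n. (cmod (c n))\<^sup>2)"
proof -
  have lim: "(\<lambda>N. \<Sum>n<N. c n *\<^sub>C E n) \<longlonglongrightarrow> ser E c" using ser_sums[OF o c] by (simp add: sums_def)
  have "(\<lambda>N. (norm (\<Sum>n<N. c n *\<^sub>C E n))\<^sup>2) \<longlonglongrightarrow> (norm (ser E c))\<^sup>2"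
    by (intro tendsto_intros lim)
  moreover have "(norm (\<Sum>n<N. c n *\<^sub>C E n))\<^sup>2 \<le> (\<Sum>n. (cmod (c n))\<^sup>2)" for N
  proof -
    have "(norm (\<Sum>n<N. c n *\<^sub>C E n))\<^sup>2 = (\<Sum>n<N. (cmod (c n))\<^sup>2 * ind (E n))"
      by (rule ofam_norm_sum[OF o]) simp
    also have "\<dots> \<le> (\<Sum>n<N. (cmod (c n))\<^sup>2)" by (intro sum_mono) (simp add: ind_le1 mult_left_le)
    also have "\<dots> \<le> (\<Sum>n. (cmod (c n))\<^sup>2)" by (rule sum_le_suminf[OF c]) auto
    finally show ?thesis .
  qed
  ultimately show ?thesis by (intro LIMSEQ_le_const2) auto
qed

lemma ser_add:
  fixes E :: "nat \<Rightarrow> 'a::chilbert_space"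
  assumes o: "ofam E" and c: "sqs c" and d: "sqs d"
  shows "ser E (\<lambda>n. c n + d n) = ser E c + ser E d"
proof -
  have "(\<lambda>n. c n *\<^sub>C E n + d n *\<^sub>C E n) sums (ser E c + ser E d)"
    by (rule sums_add[OF ser_sums[OF o c] ser_sums[OF o d]])
  hence "(\<lambda>n. (c n + d n) *\<^sub>C E n) sums (ser E c + ser E d)" by (simp add: scaleC_add_left)
  thus ?thesis using ser_sums[OF o sqs_add[OF c d]] by (metis sums_unique2)
qed

lemma ser_scale:
  fixes E :: "nat \<Rightarrow> 'a::chilbert_space"
  assumes o: "ofam E" and c: "sqs c"
  shows "ser E (\<lambda>n. a * c n) = a *\<^sub>C ser E c"
proof -
  have "(\<lambda>n. a *\<^sub>C (c n *\<^sub>C E n)) sums (a *\<^sub>C ser E c)"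
    by (rule bounded_linear.sums[OF bl_scaleC ser_sums[OF o c]])
  hence "(\<lambda>n. (a * c n) *\<^sub>C E n) sums (a *\<^sub>C ser E c)" by (simp add: scaleC_scaleC)
  thus ?thesis using ser_sums[OF o sqs_scale[OF c]] by (metis sums_unique2)
qed

lemma ser_sum:
  fixes E :: "nat \<Rightarrow> 'a::chilbert_space"
  assumes o: "ofam E" and d: "\<And>l. l \<in> L \<Longrightarrow> sqs (d l)"
  shows "ser E (\<lambda>n. \<Sum>l\<in>L. d l n) = (\<Sum>l\<in>L. ser E (d l))"
  using d
proof (induction L rule: infinite_finite_induct)
  case (infinite L) thus ?case by (simp add: ser_def)
next
  case empty thus ?case by (simp add: ser_def)
next
  case (insert a L)
  have "ser E (\<lambda>n. \<Sum>l\<in>insert a L. d l n) = ser E (\<lambda>n. d a n + (\<Sum>l\<in>L. d l n))"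
    using insert(1,2) by simp
  also have "\<dots> = ser E (d a) + ser E (\<lambda>n. \<Sum>l\<in>L. d l n)"
    by (rule ser_add[OF o]) (use insert in \<open>auto intro!: sqs_sum\<close>)
  finally show ?case using insert by simp
qed

lemma ser_cong: "(\<And>n. E n \<noteq> 0 \<Longrightarrow> c n = d n) \<Longrightarrow> ser E c = ser E d"
  unfolding ser_def by (rule arg_cong[where f=suminf]) (metis scaleC_zero_right)

lemma ser_apply:
  fixes E :: "nat \<Rightarrow> 'a::chilbert_space" and L :: "'a \<Rightarrow> 'b::real_normed_vector"
  assumes o: "ofam E" and c: "sqs c" and L: "bounded_linear L"
  shows "(\<lambda>n. L (c n *\<^sub>C E n)) sums L (ser E c)"
  by (rule bounded_linear.sums[OF L ser_sums[OF o c]])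

definition ototal :: "(nat \<Rightarrow> 'a::complex_inner) \<Rightarrow> bool" where
  "ototal E \<longleftrightarrow> (\<forall>x. (\<forall>k. cinner (E k) x = 0) \<longrightarrow> x = 0)"

lemma ser_expand:
  fixes E :: "nat \<Rightarrow> 'a::chilbert_space"
  assumes o: "ofam E" and t: "ototal E"
  shows "ser E (\<lambda>n. cinner (E n) x) = x"
proof -
  define z where "z = x - ser E (\<lambda>n. cinner (E n) x)"
  have "cinner (E k) z = 0" for k
    unfolding z_def cinner_diff_right ser_cinner[OF o sqs_bessel[OF o]] by auto
  hence "z = 0" using t unfolding ototal_def by blast
  thus ?thesis unfolding z_def by simp
qed

lemma ser_eqI:
  fixes E :: "nat \<Rightarrow> 'a::chilbert_space"
  assumes o: "ofam E" and t: "ototal E" and eq: "\<And>k. E k \<noteq> 0 \<Longrightarrow> cinner (E k) x = cinner (E k) y"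
  shows "x = y"
proof -
  have "cinner (E k) (x - y) = 0" for k using eq[of k] by (cases "E k = 0") (auto simp: cinner_diff_right)
  thus ?thesis using t unfolding ototal_def by (metis eq_iff_diff_eq_0)
qed


definition olist :: "'a::complex_inner list \<Rightarrow> bool" where
  "olist L \<longleftrightarrow> (\<forall>i j. i < length L \<longrightarrow> j < length L \<longrightarrow> i \<noteq> j \<longrightarrow> cinner (L!i) (L!j) = 0) \<and>
     (\<forall>i. i < length L \<longrightarrow> L!i \<noteq> 0 \<longrightarrow> norm (L!i) = 1)"

definition resid :: "'a::complex_inner list \<Rightarrow> 'a \<Rightarrow> 'a" where
  "resid L v = v - (\<Sum>k<length L. cinner (L!k) v *\<^sub>C L!k)"

definition nrm :: "'a::complex_inner \<Rightarrow> 'a" where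
  "nrm w = (if w = 0 then 0 else complex_of_real (1 / norm w) *\<^sub>C w)"

lemma olist_cinner: "olist L \<Longrightarrow> i < length L \<Longrightarrow> j < length L \<Longrightarrow>
  cinner (L!i) (L!j) = (if i = j \<and> L!j \<noteq> 0 then 1 else 0)"
  unfolding olist_def by (auto simp: cinner_self_norm)

lemma cinner_olist_sum:
  assumes "olist L" "j < length L"
  shows "cinner (L!j) (\<Sum>k<length L. c k *\<^sub>C L!k) = (if L!j \<noteq> 0 then c j else 0)"
proof -
  have "cinner (L!j) (\<Sum>k<length L. c k *\<^sub>C L!k) = (\<Sum>k<length L. c k * cinner (L!j) (L!k))"
    by (simp add: cinner_sum_right cinner_scaleC_right)
  also have "\<dots> = (\<Sum>k<length L. if k = j then (if L!j \<noteq> 0 then c j else 0) else 0)"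
    by (intro sum.cong refl) (auto simp: olist_cinner[OF assms(1) assms(2)])
  also have "\<dots> = (if L!j \<noteq> 0 then c j else 0)" using assms(2) by simp
  finally show ?thesis .
qed

lemma resid_orth: "olist L \<Longrightarrow> j < length L \<Longrightarrow> cinner (L!j) (resid L v) = 0"
  unfolding resid_def cinner_diff_right by (simp add: cinner_olist_sum)

lemma nrm_orth: "cinner a w = 0 \<Longrightarrow> cinner a (nrm w) = 0"
  by (simp add: nrm_def cinner_scaleC_right)

lemma nrm_norm: "nrm w \<noteq> 0 \<Longrightarrow> norm (nrm w) = 1"
  by (auto simp: nrm_def norm_scaleC norm_divide split: if_splits)

lemma nrm_eq0: "nrm w = 0 \<longleftrightarrow> w = 0"
proof
  assume z: "nrm w = 0"
  show "w = 0"
  proof (rule ccontr)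
    assume w: "w \<noteq> 0"
    have "norm (nrm w) = 1" using w by (simp add: nrm_def norm_scaleC norm_divide)
    thus False using z by simp
  qed
qed (simp add: nrm_def)

lemma nrm_scale: "w = complex_of_real (norm w) *\<^sub>C nrm w"
  by (auto simp: nrm_def scaleC_scaleC scaleC_one)

lemma cinner_cspan_left:
  assumes "\<And>v. v \<in> V \<Longrightarrow> cinner v x = 0" "y \<in> cspan V"
  shows "cinner y x = 0"
proof -
  obtain W c where W: "finite W" "W \<subseteq> V" "y = (\<Sum>v\<in>W. c v *\<^sub>C v)" using assms(2) unfolding cspan_def by blast
  show ?thesis unfolding W(3) cinner_sum_left cinner_scaleC_left using W(2) assms(1)
    by (intro sum.neutral) auto
qed

lemma olist_snocI:
  assumes L: "olist L" and o: "\<And>j. j < length L \<Longrightarrow> cinner (L!j) w = 0" and n: "w \<noteq> 0 \<Longrightarrow> norm w = 1"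
  shows "olist (L @ [w])"
  unfolding olist_def
proof (intro conjI allI impI)
  fix i j assume i: "i < length (L @ [w])" and j: "j < length (L @ [w])" and ij: "i \<noteq> j"
  have i': "i < length L \<or> i = length L" and j': "j < length L \<or> j = length L" using i j by auto
  show "cinner ((L @ [w]) ! i) ((L @ [w]) ! j) = 0"
  proof (cases "i < length L")
    case True
    show ?thesis
    proof (cases "j < length L")
      case True2: True
      thus ?thesis using True L ij unfolding olist_def by (simp add: nth_append)
    next
      case False
      hence "j = length L" using j' by simp
      thus ?thesis using True o by (simp add: nth_append)
    qed
  next
    case False
    hence ii: "i = length L" using i' by simp
    hence jj: "j < length L" using j' ij by auto
    have "cinner (L!j) w = 0" using o jj by simp
    hence "cinner w (L!j) = 0" by (metis cinner_commute complex_cnj_zero)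
    thus ?thesis using ii jj by (simp add: nth_append)
  qed
next
  fix i assume i: "i < length (L @ [w])" and nz: "(L @ [w]) ! i \<noteq> 0"
  show "norm ((L @ [w]) ! i) = 1"
  proof (cases "i < length L")
    case True thus ?thesis using L nz unfolding olist_def by (simp add: nth_append)
  next
    case False
    hence "i = length L" using i by simp
    thus ?thesis using n nz by simp
  qed
qed

lemma olist_snoc:
  assumes "olist L"
  shows "olist (L @ [nrm (resid L v)])"
  by (rule olist_snocI[OF assms]) (simp_all add: nrm_orth resid_orth[OF assms] nrm_norm)

lemma cspan_snoc:
  assumes "olist L"
  shows "v \<in> cspan (set (L @ [nrm (resid L v)]))"
proof -
  let ?r = "resid L v"
  have "v = (\<Sum>k<length L. cinner (L!k) v *\<^sub>C L!k) + complex_of_real (norm ?r) *\<^sub>C nrm ?r"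
    using nrm_scale[of ?r] unfolding resid_def by simp
  also have "\<dots> \<in> cspan (set (L @ [nrm ?r]))"
    by (intro cspan_add cspan_sum cspan_scale cspan_superset) auto
  finally show ?thesis .
qed

lemma olist_expand:
  assumes "olist L" "y \<in> cspan (set L)"
  shows "y = (\<Sum>k<length L. cinner (L!k) y *\<^sub>C L!k)"
proof -
  have S: "(\<Sum>k<length L. cinner (L!k) y *\<^sub>C L!k) \<in> cspan (set L)"
    by (intro cspan_sum cspan_scale cspan_superset) auto
  have "resid L y = y + (-1) *\<^sub>C (\<Sum>k<length L. cinner (L!k) y *\<^sub>C L!k)"
    unfolding resid_def scaleC_minus1 by simp
  also have "\<dots> \<in> cspan (set L)" by (intro cspan_add assms(2) cspan_scale S)
  finally have "resid L y \<in> cspan (set L)" .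
  moreover have "cinner v (resid L y) = 0" if vL: "v \<in> set L" for v
  proof -
    obtain j where "j < length L" "v = L!j" using vL by (auto simp: in_set_conv_nth)
    thus ?thesis using resid_orth[OF assms(1)] by simp
  qed
  ultimately have "cinner (resid L y) (resid L y) = 0" by (rule cinner_cspan_left[rotated])
  hence "resid L y = 0" by (simp add: cinner_eq_zero_iff)
  thus ?thesis unfolding resid_def by simp
qed

fun gsl :: "(nat \<Rightarrow> 'a::complex_inner list \<Rightarrow> 'a) \<Rightarrow> nat \<Rightarrow> 'a list" where
  "gsl ch 0 = []"
| "gsl ch (Suc N) = gsl ch N @ [nrm (resid (gsl ch N) (ch N (gsl ch N)))]"

lemma gsl_length[simp]: "length (gsl ch N) = N"
  by (induction N) auto

lemma gsl_olist: "olist (gsl ch N)"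
proof (induction N)
  case 0 thus ?case by (simp add: olist_def)
next
  case (Suc N) thus ?case by (simp add: olist_snoc)
qed

definition gsf :: "(nat \<Rightarrow> 'a::complex_inner list \<Rightarrow> 'a) \<Rightarrow> nat \<Rightarrow> 'a" where
  "gsf ch n = gsl ch (Suc n) ! n"

lemma gsl_nth: "k < N \<Longrightarrow> gsl ch N ! k = gsf ch k"
proof (induction N)
  case 0 thus ?case by simp
next
  case (Suc N)
  show ?case
  proof (cases "k < N")
    case True thus ?thesis using Suc by (simp add: nth_append)
  next
    case False hence "k = N" using Suc by simp
    thus ?thesis by (simp add: gsf_def)
  qed
qed

lemma gsl_set: "set (gsl ch N) = gsf ch ` {..<N}"
proof -
  have "set (gsl ch N) = (\<lambda>i. gsl ch N ! i) ` {..<N}" by (simp add: set_conv_nth lessThan_def image_Collect)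
  also have "\<dots> = gsf ch ` {..<N}" by (rule image_cong) (auto simp: gsl_nth)
  finally show ?thesis .
qed

lemma gsf_ofam: "ofam (gsf ch)"
  unfolding ofam_def
proof (intro conjI allI impI)
  fix n m :: nat assume nm: "n \<noteq> m"
  let ?N = "Suc (max n m)"
  have "cinner (gsl ch ?N ! n) (gsl ch ?N ! m) = 0"
    using gsl_olist[of ch ?N] nm unfolding olist_def by auto
  moreover have "gsl ch ?N ! n = gsf ch n" by (rule gsl_nth) simp
  moreover have "gsl ch ?N ! m = gsf ch m" by (rule gsl_nth) simp
  ultimately show "cinner (gsf ch n) (gsf ch m) = 0" by simp
next
  fix n assume "gsf ch n \<noteq> 0"
  thus "norm (gsf ch n) = 1" using gsl_olist[of ch "Suc n"] unfolding olist_def gsf_def by auto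
qed

lemma gsl_span: "ch N (gsl ch N) \<in> cspan (set (gsl ch (Suc N)))"
  using cspan_snoc[OF gsl_olist] by simp

lemma separable_total:
  fixes D :: "'a::chilbert_space set"
  assumes "countable D" "closure D = UNIV"
  shows "\<exists>E::nat \<Rightarrow> 'a. ofam E \<and> ototal E"
proof -
  have "D \<noteq> {}" using assms(2) by auto
  define d where "d = from_nat_into D"
  have rd: "range d = D" unfolding d_def using assms(1) \<open>D \<noteq> {}\<close> by simp
  define ch where "ch = (\<lambda>N (L::'a list). d N)"
  define E where "E = gsf ch"
  have "ototal E" unfolding ototal_def
  proof (intro allI impI)
    fix x assume x: "\<forall>k. cinner (E k) x = 0"
    have dN: "cinner (d N) x = 0" for N
    proof (rule cinner_cspan_left[of "set (gsl ch (Suc N))"])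
      show "d N \<in> cspan (set (gsl ch (Suc N)))" using gsl_span[of ch N] by (simp add: ch_def)
      show "cinner v x = 0" if "v \<in> set (gsl ch (Suc N))" for v
        using that x unfolding gsl_set E_def by auto
    qed
    have "x \<in> closure (range d)" using assms(2) rd by simp
    then obtain f where f: "\<And>n. f n \<in> range d" "f \<longlonglongrightarrow> x" unfolding closure_sequential by blast
    have "(\<lambda>n. cinner (f n) x) \<longlonglongrightarrow> cinner x x"
      by (rule bounded_bilinear.tendsto[OF bounded_bilinear_cinner f(2) tendsto_const])
    moreover have "cinner (f n) x = 0" for n using f(1)[of n] dN by auto
    ultimately have "cinner x x = 0" by (simp add: LIMSEQ_const_iff)
    thus "x = 0" by (simp add: cinner_eq_zero_iff)
  qed
  thus ?thesis using gsf_ofam[of ch] unfolding E_def by blast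
qed

lemma infinite_onseq:
  assumes "\<not> cfinite_dim TYPE('a::complex_inner)"
  shows "\<exists>U::nat \<Rightarrow> 'a. ofam U \<and> (\<forall>n. U n \<noteq> 0)"
proof -
  have nf: "\<exists>y. y \<notin> cspan (set L)" for L :: "'a list"
    using assms unfolding cfinite_dim_def by blast
  define ch where "ch = (\<lambda>(N::nat) (L::'a list). SOME y. y \<notin> cspan (set L))"
  have chL: "ch N L \<notin> cspan (set L)" for N L unfolding ch_def using someI_ex[OF nf[of L]] by simp
  have "gsf ch n \<noteq> 0" for n
  proof
    assume z: "gsf ch n = 0"
    let ?L = "gsl ch n"
    have "resid ?L (ch n ?L) = 0"
    proof (rule ccontr)
      assume "resid ?L (ch n ?L) \<noteq> 0"
      hence "nrm (resid ?L (ch n ?L)) \<noteq> 0" by (simp add: nrm_eq0)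
      moreover have "gsf ch n = nrm (resid ?L (ch n ?L))"
        unfolding gsf_def using nth_append_length[of ?L] by simp
      ultimately show False using z by simp
    qed
    hence "ch n ?L = (\<Sum>k<length ?L. cinner (?L!k) (ch n ?L) *\<^sub>C ?L!k)" unfolding resid_def by simp
    also have "\<dots> \<in> cspan (set ?L)" by (intro cspan_sum cspan_scale cspan_superset) auto
    finally show False using chL by blast
  qed
  thus ?thesis using gsf_ofam[of ch] by blast
qed

lemma finite_olist:
  assumes "finite V"
  shows "\<exists>L. olist L \<and> length L = card V \<and> V \<subseteq> cspan (set L)"
proof -
  obtain vs where vs: "set vs = V" "distinct vs" using finite_distinct_list[OF assms] by blast
  define ch where "ch = (\<lambda>(N::nat) (L::'a list). vs ! N)"
  define L where "L = gsl ch (length vs)"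
  have "V \<subseteq> cspan (set L)"
  proof
    fix v assume "v \<in> V"
    then obtain N where N: "N < length vs" "v = vs ! N" using vs(1) by (metis in_set_conv_nth)
    have "v \<in> cspan (set (gsl ch (Suc N)))" using gsl_span[of ch N] N by (simp add: ch_def)
    also have "\<dots> \<subseteq> cspan (set L)" unfolding L_def
      by (rule cspan_mono) (use N in \<open>simp only: gsl_set, auto\<close>)
    finally show "v \<in> cspan (set L)" .
  qed
  moreover have "length L = card V" unfolding L_def using vs distinct_card by fastforce
  ultimately show ?thesis using gsl_olist unfolding L_def by blast
qed


lemma ser_diff:
  fixes E :: "nat \<Rightarrow> 'a::chilbert_space"
  assumes o: "ofam E" and c: "sqs c" and d: "sqs d"
  shows "ser E (\<lambda>n. c n - d n) = ser E c - ser E d"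
proof -
  have d': "sqs (\<lambda>n. (-1) * d n)" by (rule sqs_scale[OF d])
  have "ser E (\<lambda>n. c n - d n) = ser E (\<lambda>n. c n + (-1) * d n)" by simp
  also have "\<dots> = ser E c + ser E (\<lambda>n. (-1) * d n)" by (rule ser_add[OF o c d'])
  also have "ser E (\<lambda>n. (-1) * d n) = (-1) *\<^sub>C ser E d" by (rule ser_scale[OF o d])
  finally show ?thesis by (simp add: scaleC_minus1)
qed

lemma ser_norm_le:
  fixes E :: "nat \<Rightarrow> 'a::chilbert_space"
  assumes o: "ofam E" and b: "\<And>N. (\<Sum>n<N. (cmod (c n))\<^sup>2) \<le> B\<^sup>2" and B: "B \<ge> 0"
  shows "norm (ser E c) \<le> B"
proof -
  have s: "sqs c" by (rule summable_sq_bound(1)[OF b])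
  have "(norm (ser E c))\<^sup>2 \<le> (\<Sum>n. (cmod (c n))\<^sup>2)" by (rule ser_norm[OF o s])
  also have "\<dots> \<le> B\<^sup>2" by (rule summable_sq_bound(2)[OF b])
  finally have "(norm (ser E c))\<^sup>2 \<le> B\<^sup>2" .
  thus ?thesis using B by (rule power2_le_imp_le)
qed

definition xfer :: "(nat \<Rightarrow> 'a::complex_inner) \<Rightarrow> (nat \<Rightarrow> 'b::complex_inner) \<Rightarrow> 'a \<Rightarrow> 'b" where
  "xfer E F x = ser F (\<lambda>n. cinner (E n) x)"

lemma xfer_norm:
  fixes E :: "nat \<Rightarrow> 'a::chilbert_space" and F :: "nat \<Rightarrow> 'b::chilbert_space"
  assumes "ofam E" "ofam F"
  shows "norm (xfer E F x) \<le> norm x"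
  unfolding xfer_def by (rule ser_norm_le[OF assms(2) bessel[OF assms(1)]]) simp

lemma xfer_bclin:
  fixes E :: "nat \<Rightarrow> 'a::chilbert_space" and F :: "nat \<Rightarrow> 'b::chilbert_space"
  assumes oE: "ofam E" and oF: "ofam F"
  shows "bounded_clinear (xfer E F)"
proof (rule bclin_intro[where K=1])
  show "clinear (xfer E F)"
  proof (rule clinear_intro)
    fix x y
    show "xfer E F (x + y) = xfer E F x + xfer E F y" unfolding xfer_def cinner_add_right
      by (rule ser_add[OF oF sqs_bessel[OF oE] sqs_bessel[OF oE]])
  next
    fix c x
    show "xfer E F (c *\<^sub>C x) = c *\<^sub>C xfer E F x" unfolding xfer_def cinner_scaleC_right
      by (rule ser_scale[OF oF sqs_bessel[OF oE]])
  qed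
  fix x show "norm (xfer E F x) \<le> norm x * 1" using xfer_norm[OF oE oF] by simp
qed

lemma xfer_onorm:
  fixes E :: "nat \<Rightarrow> 'a::chilbert_space" and F :: "nat \<Rightarrow> 'b::chilbert_space"
  assumes oE: "ofam E" and oF: "ofam F"
  shows "onorm (xfer E F) \<le> 1"
  by (rule onorm_bound) (simp_all add: xfer_norm[OF oE oF])

lemma xfer_cinner:
  fixes E :: "nat \<Rightarrow> 'a::chilbert_space" and F :: "nat \<Rightarrow> 'b::chilbert_space"
  assumes oE: "ofam E" and oF: "ofam F"
  shows "cinner (F k) (xfer E F x) = (if F k = 0 then 0 else cinner (E k) x)"
  unfolding xfer_def by (rule ser_cinner[OF oF sqs_bessel[OF oE]])

lemma xfer_inv:
  fixes E :: "nat \<Rightarrow> 'a::chilbert_space" and F :: "nat \<Rightarrow> 'b::chilbert_space"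
  assumes oE: "ofam E" and tE: "ototal E" and oF: "ofam F" and nF: "\<And>n. F n \<noteq> 0"
  shows "xfer F E (xfer E F x) = x"
proof -
  have "xfer F E (xfer E F x) = ser E (\<lambda>n. cinner (E n) x)"
    unfolding xfer_def[of F E] by (rule ser_cong) (simp add: xfer_cinner[OF oE oF] nF)
  also have "\<dots> = x" by (rule ser_expand[OF oE tE])
  finally show ?thesis .
qed

definition kap :: "(nat \<Rightarrow> 'a::complex_inner) \<Rightarrow> 'a \<Rightarrow> 'a" where
  "kap E y = ser E (\<lambda>m. cinner y (E m))"

lemma sum_cnj_sq: "(\<Sum>n<N. (cmod (cinner y (E n)))\<^sup>2) = (\<Sum>n<N. (cmod (cinner (E n) y))\<^sup>2)"
  by (intro sum.cong refl) (metis cinner_commute complex_mod_cnj)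

lemma kap_sqs: "ofam E \<Longrightarrow> sqs (\<lambda>m. cinner y (E m))"
  by (rule summable_sq_bound(1)[of _ "(norm y)\<^sup>2"]) (simp add: sum_cnj_sq bessel)

lemma kap_norm:
  fixes E :: "nat \<Rightarrow> 'a::chilbert_space"
  assumes o: "ofam E" shows "norm (kap E y) \<le> norm y"
  unfolding kap_def by (rule ser_norm_le[OF o]) (simp_all add: sum_cnj_sq bessel[OF o])

lemma kap_cinner:
  fixes E :: "nat \<Rightarrow> 'a::chilbert_space"
  assumes o: "ofam E" shows "cinner (E k) (kap E y) = (if E k = 0 then 0 else cinner y (E k))"
  unfolding kap_def by (rule ser_cinner[OF o kap_sqs[OF o]])

lemma kap_add:
  fixes E :: "nat \<Rightarrow> 'a::chilbert_space"
  assumes o: "ofam E" shows "kap E (x + y) = kap E x + kap E y"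
  unfolding kap_def cinner_add_left by (rule ser_add[OF o kap_sqs[OF o] kap_sqs[OF o]])

lemma kap_scale:
  fixes E :: "nat \<Rightarrow> 'a::chilbert_space"
  assumes o: "ofam E" shows "kap E (c *\<^sub>C y) = cnj c *\<^sub>C kap E y"
  unfolding kap_def cinner_scaleC_left by (rule ser_scale[OF o kap_sqs[OF o]])

lemma kap_basis:
  fixes E :: "nat \<Rightarrow> 'a::chilbert_space"
  assumes o: "ofam E" and t: "ototal E" shows "kap E (E k) = E k"
proof (rule ser_eqI[OF o t])
  fix j assume "E j \<noteq> 0"
  thus "cinner (E j) (kap E (E k)) = cinner (E j) (E k)"
    by (simp add: kap_cinner[OF o] ofam_cinner[OF o])
qed

lemma cinner_kap_basis:
  fixes E :: "nat \<Rightarrow> 'a::chilbert_space"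
  assumes o: "ofam E" shows "cinner (kap E y) (E n) = (if E n = 0 then 0 else cinner (E n) y)"
proof -
  have "cinner (kap E y) (E n) = cnj (cinner (E n) (kap E y))" by (rule cinner_commute)
  also have "\<dots> = (if E n = 0 then 0 else cinner (E n) y)"
    by (simp add: kap_cinner[OF o]) (metis cinner_commute)
  finally show ?thesis .
qed

definition trn :: "(nat \<Rightarrow> 'a::complex_inner) \<Rightarrow> ('a \<Rightarrow> 'a) \<Rightarrow> 'a \<Rightarrow> 'a" where
  "trn E X y = ser E (\<lambda>n. cinner (kap E y) (X (E n)))"

lemma trn_norm:
  fixes E :: "nat \<Rightarrow> 'a::chilbert_space"
  assumes o: "ofam E" and X: "bounded_clinear X"
  shows "norm (trn E X y) \<le> onorm X * norm y"
  unfolding trn_def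
proof (rule ser_norm_le[OF o])
  fix N
  have "(\<Sum>n<N. (cmod (cinner (kap E y) (X (E n))))\<^sup>2) \<le> (onorm X * norm (kap E y))\<^sup>2"
    by (rule coef_bound[OF X o])
  also have "\<dots> \<le> (onorm X * norm y)\<^sup>2"
    by (intro power_mono mult_left_mono kap_norm[OF o] bclin_onorm_nonneg[OF X]) (simp add: bclin_onorm_nonneg[OF X])
  finally show "(\<Sum>n<N. (cmod (cinner (kap E y) (X (E n))))\<^sup>2) \<le> (onorm X * norm y)\<^sup>2" .
  show "0 \<le> onorm X * norm y" by (simp add: bclin_onorm_nonneg[OF X])
qed

lemma trn_bclin:
  fixes E :: "nat \<Rightarrow> 'a::chilbert_space"
  assumes o: "ofam E" and X: "bounded_clinear X"
  shows "bounded_clinear (trn E X)"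
proof (rule bclin_intro[where K="onorm X"])
  show "clinear (trn E X)"
  proof (rule clinear_intro)
    fix x y
    show "trn E X (x + y) = trn E X x + trn E X y" unfolding trn_def kap_add[OF o] cinner_add_left
      by (rule ser_add[OF o sqs_coef[OF X o] sqs_coef[OF X o]])
  next
    fix c x
    show "trn E X (c *\<^sub>C x) = c *\<^sub>C trn E X x" unfolding trn_def kap_scale[OF o] cinner_scaleC_left complex_cnj_cnj
      by (rule ser_scale[OF o sqs_coef[OF X o]])
  qed
  fix x show "norm (trn E X x) \<le> norm x * onorm X" using trn_norm[OF o X] by (simp add: mult.commute)
qed

lemma trn_onorm:
  fixes E :: "nat \<Rightarrow> 'a::chilbert_space"
  assumes o: "ofam E" and X: "bounded_clinear X"
  shows "onorm (trn E X) \<le> onorm X"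
  by (rule onorm_bound) (simp_all add: trn_norm[OF o X] bclin_onorm_nonneg[OF X])

lemma trn_diff:
  fixes E :: "nat \<Rightarrow> 'a::chilbert_space"
  assumes o: "ofam E" and X: "bounded_clinear X" and F: "bounded_clinear F"
  shows "trn E (\<lambda>x. X x - F x) y = trn E X y - trn E F y"
  unfolding trn_def cinner_diff_right by (rule ser_diff[OF o sqs_coef[OF X o] sqs_coef[OF F o]])

lemma cinner_ser:
  fixes E :: "nat \<Rightarrow> 'a::chilbert_space"
  assumes o: "ofam E" and c: "sqs c"
  shows "(\<lambda>n. c n * cinner z (E n)) sums cinner z (ser E c)"
  using ser_apply[OF o c bl_cinner_right[of z]] by (simp add: cinner_scaleC_right)

lemma trn_trn:
  fixes E :: "nat \<Rightarrow> 'a::chilbert_space"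
  assumes o: "ofam E" and t: "ototal E" and X: "bounded_clinear X"
  shows "trn E (trn E X) y = X y"
proof (rule ser_eqI[OF o t])
  fix k assume k: "E k \<noteq> 0"
  have "cinner (E k) (trn E (trn E X) y) = cinner (kap E y) (trn E X (E k))"
    unfolding trn_def[of E "trn E X"] using k by (simp add: ser_cinner[OF o sqs_coef[OF trn_bclin[OF o X] o]])
  also have "trn E X (E k) = ser E (\<lambda>n. cinner (E k) (X (E n)))"
    unfolding trn_def kap_basis[OF o t] ..
  finally have 1: "cinner (E k) (trn E (trn E X) y) = cinner (kap E y) (ser E (\<lambda>n. cinner (E k) (X (E n))))" .
  have "(\<lambda>n. cinner (E k) (X (E n)) * cinner (kap E y) (E n)) sums cinner (kap E y) (ser E (\<lambda>n. cinner (E k) (X (E n))))"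
    by (rule cinner_ser[OF o sqs_coef[OF X o]])
  moreover have "(\<lambda>n. cinner (E k) (X (E n)) * cinner (kap E y) (E n)) = (\<lambda>n. cinner (E k) (X (cinner (E n) y *\<^sub>C E n)))"
    by (rule ext) (simp add: cinner_kap_basis[OF o] clinear_scaleC[OF bclin_clinear[OF X]]
        clinear_zero[OF bclin_clinear[OF X]] cinner_scaleC_right mult.commute)
  ultimately have 2: "(\<lambda>n. cinner (E k) (X (cinner (E n) y *\<^sub>C E n))) sums cinner (kap E y) (ser E (\<lambda>n. cinner (E k) (X (E n))))"
    by simp
  have 3: "(\<lambda>n. cinner (E k) (X (cinner (E n) y *\<^sub>C E n))) sums cinner (E k) (X (ser E (\<lambda>n. cinner (E n) y)))"
    by (rule ser_apply[OF o sqs_bessel[OF o]]) (rule bounded_linear_compose[OF bl_cinner_right bclin_linear[OF X]])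
  show "cinner (E k) (trn E (trn E X) y) = cinner (E k) (X y)"
    unfolding 1 using sums_unique2[OF 2 3] ser_expand[OF o t, of y] by simp
qed

lemma trn_crank:
  fixes E :: "nat \<Rightarrow> 'a::chilbert_space"
  assumes o: "ofam E" and F: "bounded_clinear F" and r: "crank F < enat N"
  shows "crank (trn E F) < enat N"
proof -
  obtain V where V: "finite V" "range F \<subseteq> cspan V" "card V < N" using r unfolding crank_lt_iff by blast
  obtain L where L: "olist L" "length L = card V" "V \<subseteq> cspan (set L)" using finite_olist[OF V(1)] by blast
  have rF: "range F \<subseteq> cspan (set L)" using V(2) cspan_minimal[OF L(3)] by blast
  define z where "z l = ser E (\<lambda>n. cinner (L!l) (F (E n)))" for l
  have "range (trn E F) \<subseteq> cspan (z ` {..<length L})"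
  proof
    fix w assume "w \<in> range (trn E F)"
    then obtain y where y: "w = trn E F y" by blast
    have ex: "F (E n) = (\<Sum>l<length L. cinner (L!l) (F (E n)) *\<^sub>C L!l)" for n
      using olist_expand[OF L(1)] rF by blast
    have "w = ser E (\<lambda>n. \<Sum>l<length L. cinner (kap E y) (L!l) * cinner (L!l) (F (E n)))"
      unfolding y trn_def by (rule ser_cong) (subst ex, simp add: cinner_sum_right cinner_scaleC_right mult.commute)
    also have "\<dots> = (\<Sum>l<length L. ser E (\<lambda>n. cinner (kap E y) (L!l) * cinner (L!l) (F (E n))))"
      by (rule ser_sum[OF o]) (intro sqs_scale sqs_coef[OF F o])
    also have "\<dots> = (\<Sum>l<length L. cinner (kap E y) (L!l) *\<^sub>C z l)"
      unfolding z_def by (intro sum.cong refl ser_scale[OF o sqs_coef[OF F o]])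
    also have "\<dots> \<in> cspan (z ` {..<length L})" by (intro cspan_sum cspan_scale cspan_superset) auto
    finally show "w \<in> cspan (z ` {..<length L})" .
  qed
  moreover have "card (z ` {..<length L}) < N" using card_image_le[of "{..<length L}" z] L(2) V(3) by simp
  ultimately show ?thesis unfolding crank_lt_iff by blast
qed

lemma approx_num_trn:
  fixes E :: "nat \<Rightarrow> 'a::chilbert_space"
  assumes o: "ofam E" and X: "bounded_clinear X" and N: "N \<ge> 1"
  shows "approx_num N (trn E X) \<le> approx_num N X"
proof (rule eps_le[where K=1])
  fix e :: real assume e: "e > 0"
  have "approx_num N X < approx_num N X + e" using e by linarith
  from approx_num_lt[OF X N this]
  obtain F where F: "bounded_clinear F" "crank F < enat N" "onorm (\<lambda>x. X x - F x) < approx_num N X + e"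
    by blast
  have "approx_num N (trn E X) \<le> onorm (\<lambda>x. trn E X x - trn E F x)"
    by (rule approx_num_le[OF trn_bclin[OF o X] trn_bclin[OF o F(1)] trn_crank[OF o F(1,2)]])
  also have "(\<lambda>x. trn E X x - trn E F x) = trn E (\<lambda>x. X x - F x)"
    by (rule ext) (simp add: trn_diff[OF o X F(1)])
  also have "onorm \<dots> \<le> onorm (\<lambda>x. X x - F x)" by (rule trn_onorm[OF o bclin_diff[OF X F(1)]])
  finally show "approx_num N (trn E X) \<le> approx_num N X + 1 * e" using F(3) by simp
qed

lemma approx_num_trn':
  fixes E :: "nat \<Rightarrow> 'a::chilbert_space"
  assumes o: "ofam E" and t: "ototal E" and X: "bounded_clinear X" and N: "N \<ge> 1"
  shows "approx_num N X \<le> approx_num N (trn E X)"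
proof -
  have "trn E (trn E X) = X" by (rule ext) (rule trn_trn[OF o t X])
  hence "approx_num N X = approx_num N (trn E (trn E X))" by simp
  also have "\<dots> \<le> approx_num N (trn E X)" by (rule approx_num_trn[OF o trn_bclin[OF o X] N])
  finally show ?thesis .
qed


definition fn :: "('a::complex_inner \<times> 'b) list \<Rightarrow> ('b \<Rightarrow> 'a) \<Rightarrow> complex" where
  "fn ps X = sum_list (map (\<lambda>p. cinner (fst p) (X (snd p))) ps)"

lemma fn_append: "fn (ps @ qs) X = fn ps X + fn qs X"
  by (simp add: fn_def)

lemma fn_scale: "fn (map (\<lambda>p. (cnj c *\<^sub>C fst p, snd p)) ps) X = c * fn ps X"
  by (induction ps) (simp_all add: fn_def cinner_scaleC_left algebra_simps)

lemma fn_lin: "fn ps (\<lambda>h. \<Sum>j\<in>J. a j *\<^sub>C T j h) = (\<Sum>j\<in>J. a j * fn ps (T j))"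
proof (induction ps)
  case Nil thus ?case by (simp add: fn_def)
next
  case (Cons p ps)
  have "fn (p # ps) (\<lambda>h. \<Sum>j\<in>J. a j *\<^sub>C T j h) = cinner (fst p) (\<Sum>j\<in>J. a j *\<^sub>C T j (snd p)) + fn ps (\<lambda>h. \<Sum>j\<in>J. a j *\<^sub>C T j h)"
    by (simp add: fn_def)
  also have "\<dots> = (\<Sum>j\<in>J. a j * cinner (fst p) (T j (snd p))) + (\<Sum>j\<in>J. a j * fn ps (T j))"
    by (simp add: Cons cinner_sum_right cinner_scaleC_right)
  also have "\<dots> = (\<Sum>j\<in>J. a j * fn (p # ps) (T j))"
    by (simp add: fn_def sum.distrib algebra_simps)
  finally show ?case .
qed

lemma fn_lincomb: "\<exists>ps. \<forall>X. fn ps X = (\<Sum>i<(m::nat). a i * fn (qs i) X)"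
proof (induction m)
  case 0 show ?case by (rule exI[of _ "[]"]) (simp add: fn_def)
next
  case (Suc m)
  then obtain ps where ps: "\<forall>X. fn ps X = (\<Sum>i<m. a i * fn (qs i) X)" by blast
  show ?case
    by (rule exI[of _ "ps @ map (\<lambda>p. (cnj (a m) *\<^sub>C fst p, snd p)) (qs m)"])
       (simp add: fn_append fn_scale ps)
qed

lemma indep_restrict: "clin_indep_ops (Suc m) T \<Longrightarrow> clin_indep_ops m T"
  unfolding clin_indep_ops_def
proof (intro allI impI)
  fix c i
  assume H: "\<forall>c. (\<forall>x. (\<Sum>i<Suc m. c i *\<^sub>C T i x) = 0) \<longrightarrow> (\<forall>i<Suc m. c i = 0)"
    and z: "\<forall>x. (\<Sum>i<m. c i *\<^sub>C T i x) = 0" and i: "i < m"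
  define c' where "c' j = (if j < m then c j else 0)" for j
  have "\<forall>x. (\<Sum>j<Suc m. c' j *\<^sub>C T j x) = 0" using z by (simp add: c'_def)
  hence "c' i = 0" using H i by auto
  thus "c i = 0" using i by (simp add: c'_def)
qed

lemma dual_basis:
  fixes T :: "nat \<Rightarrow> 'a \<Rightarrow> 'a::complex_inner"
  assumes "clin_indep_ops m T" "i < m"
  shows "\<exists>ps. \<forall>j<m. fn ps (T j) = (if j = i then 1 else 0)"
  using assms
proof (induction m arbitrary: i)
  case 0 thus ?case by simp
next
  case (Suc m)
  have IH: "\<forall>i<m. \<exists>ps. \<forall>j<m. fn ps (T j) = (if j = i then 1 else 0)"
    using Suc.IH indep_restrict[OF Suc.prems(1)] by blast
  then obtain P where P: "\<And>i j. i < m \<Longrightarrow> j < m \<Longrightarrow> fn (P i) (T j) = (if j = i then 1 else 0)"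
    by metis
  define a where "a i = (if i < m then - fn (P i) (T m) else 1)" for i
  define T' where "T' h = (\<Sum>i<Suc m. a i *\<^sub>C T i h)" for h
  have T'eq: "T' h = T m h - (\<Sum>i<m. fn (P i) (T m) *\<^sub>C T i h)" for h
    by (simp add: T'_def a_def scaleC_minus_left scaleC_one sum_negf)
  obtain f0 where f0: "T' f0 \<noteq> 0"
  proof (rule ccontr)
    assume "\<not> thesis"
    hence "\<forall>x. T' x = 0" using that by blast
    hence "a m = 0" using Suc.prems(1) unfolding clin_indep_ops_def T'_def by blast
    thus False by (simp add: a_def)
  qed
  define e0 where "e0 = complex_of_real (1 / (norm (T' f0))\<^sup>2) *\<^sub>C T' f0"
  have "cinner e0 (T' f0) = complex_of_real (1 / (norm (T' f0))\<^sup>2) * complex_of_real ((norm (T' f0))\<^sup>2)"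
    by (simp add: e0_def cinner_scaleC_left cinner_self_norm del: of_real_power)
  hence e0: "cinner e0 (T' f0) = 1" using f0 by (simp del: of_real_power add: of_real_mult[symmetric])
  define q where "q = [(e0, f0)]"
  have q1: "fn q T' = 1" by (simp add: q_def fn_def e0)
  obtain pE where pE: "\<forall>X. fn pE X = (\<Sum>i<m. (- fn q (T i)) * fn (P i) X)"
    using fn_lincomb[where m=m and a="\<lambda>i. - fn q (T i)" and qs=P] by blast
  define E where "E = q @ pE"
  have E: "fn E (T j) = (if j = m then 1 else 0)" if j: "j < Suc m" for j
  proof (cases "j = m")
    case True
    have "fn q T' = (\<Sum>i<Suc m. a i * fn q (T i))" unfolding T'_def by (rule fn_lin)
    also have "\<dots> = fn q (T m) + (\<Sum>i<m. (- fn (P i) (T m)) * fn q (T i))" by (simp add: a_def)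
    finally have "fn q (T m) + (\<Sum>i<m. (- fn q (T i)) * fn (P i) (T m)) = 1"
      using q1 by (simp add: mult.commute)
    thus ?thesis using True by (simp add: E_def fn_append pE)
  next
    case False
    hence jm: "j < m" using j by simp
    have "(\<Sum>i<m. (- fn q (T i)) * fn (P i) (T j)) = (\<Sum>i<m. if i = j then - fn q (T j) else 0)"
      by (intro sum.cong refl) (simp add: P jm)
    also have "\<dots> = - fn q (T j)" using jm by simp
    finally show ?thesis using False by (simp add: E_def fn_append pE)
  qed
  show ?case
  proof (cases "i = m")
    case True thus ?thesis using E by (intro exI[of _ E]) auto
  next
    case False
    hence im: "i < m" using Suc.prems(2) by simp
    define cQ where "cQ = - fn (P i) (T m)"
    define Q where "Q = P i @ map (\<lambda>p. (cnj cQ *\<^sub>C fst p, snd p)) E"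
    have fQ: "fn Q X = fn (P i) X + cQ * fn E X" for X
      unfolding Q_def by (simp only: fn_append fn_scale)
    have "fn Q (T j) = (if j = i then 1 else 0)" if j: "j < Suc m" for j
    proof (cases "j = m")
      case True thus ?thesis using im E[OF j] by (simp add: fQ cQ_def)
    next
      case False
      hence "j < m" using j by simp
      thus ?thesis using E[OF j] False P[OF im] by (simp add: fQ)
    qed
    thus ?thesis by blast
  qed
qed

lemma fn_nth: "fn ps X = (\<Sum>k<length ps. cinner (fst (ps!k)) (X (snd (ps!k))))"
  unfolding fn_def by (simp add: sum_list_sum_nth atLeast0LessThan)


lemma c0_bounded: assumes "\<alpha> \<in> c0" shows "\<exists>K. \<forall>k. cmod (\<alpha> k) \<le> K"
proof -
  have "Bseq \<alpha>" using assms unfolding c0_def by (intro convergent_imp_Bseq) (auto simp: convergent_def)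
  thus ?thesis unfolding Bseq_def by blast
qed

definition rset :: "(nat \<Rightarrow> complex) \<Rightarrow> nat \<Rightarrow> real set" where
  "rset \<alpha> n = {t. 0 \<le> t \<and> finite {k. cmod (\<alpha> k) > t} \<and> card {k. cmod (\<alpha> k) > t} \<le> n}"

lemma decr_rearr_rset: "decr_rearr \<alpha> n = Inf (rset \<alpha> n)"
  by (simp add: decr_rearr_def rset_def)

lemma rset_nonempty: "\<alpha> \<in> c0 \<Longrightarrow> rset \<alpha> n \<noteq> {}"
proof -
  assume "\<alpha> \<in> c0"
  then obtain K where K: "\<And>k. cmod (\<alpha> k) \<le> K" using c0_bounded by blast
  have K': "cmod (\<alpha> k) \<le> max K 0" for k using K[of k] by linarith
  have e: "{k. cmod (\<alpha> k) > max K 0} = {}" using K' by (meson Collect_empty_eq not_less)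
  have "max K 0 \<in> rset \<alpha> n" unfolding rset_def mem_Collect_eq e by simp
  thus ?thesis by blast
qed

lemma decr_rearr_mono:
  assumes "\<beta> \<in> c0" "\<gamma> \<in> c0" "\<And>k. cmod (\<beta> k) \<le> cmod (\<gamma> k)"
  shows "decr_rearr \<beta> n \<le> decr_rearr \<gamma> n"
  unfolding decr_rearr_rset
proof (rule cInf_superset_mono)
  show "rset \<gamma> n \<noteq> {}" by (rule rset_nonempty[OF assms(2)])
  show "bdd_below (rset \<beta> n)" unfolding rset_def bdd_below_def by auto
  show "rset \<gamma> n \<subseteq> rset \<beta> n"
  proof
    fix t assume t: "t \<in> rset \<gamma> n"
    have sub: "{k. cmod (\<beta> k) > t} \<subseteq> {k. cmod (\<gamma> k) > t}" using assms(3) by (auto intro: less_le_trans)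
    have f: "finite {k. cmod (\<gamma> k) > t}" using t unfolding rset_def by simp
    have "card {k. cmod (\<beta> k) > t} \<le> card {k. cmod (\<gamma> k) > t}" by (rule card_mono[OF f sub])
    thus "t \<in> rset \<beta> n" using t finite_subset[OF sub f] unfolding rset_def by simp
  qed
qed

lemma calkin_sum:
  assumes I: "calkin_space I" and J: "finite J" and f: "\<And>j. j \<in> J \<Longrightarrow> f j \<in> I"
  shows "(\<lambda>k. \<Sum>j\<in>J. f j k) \<in> I"
  using J f
proof (induction J rule: finite_induct)
  case empty thus ?case using I by (simp add: calkin_space_def)
next
  case (insert a J)
  have "(\<lambda>k. \<Sum>j\<in>insert a J. f j k) = (\<lambda>k. f a k + (\<Sum>j\<in>J. f j k))" using insert(1,2) by simp
  also have "\<dots> \<in> I" using insert I unfolding calkin_space_def by auto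
  finally show ?case .
qed

lemma div_tendsto: assumes "r \<ge> (1::nat)" shows "filterlim (\<lambda>k. k div r) sequentially sequentially"
  unfolding filterlim_at_top
proof (intro allI)
  fix Z :: nat
  show "eventually (\<lambda>k. Z \<le> k div r) sequentially"
    unfolding eventually_sequentially
  proof (intro exI allI impI)
    fix k assume "Z * r \<le> k"
    hence "Z * r div r \<le> k div r" by (rule div_le_mono)
    thus "Z \<le> k div r" using assms by simp
  qed
qed

lemma calkin_transfer:
  fixes T :: "'a::complex_inner \<Rightarrow> 'b::complex_inner" and h :: "nat \<Rightarrow> real"
  assumes T: "bounded_clinear T" and r: "r \<ge> 1" and bd: "\<forall>n\<ge>1. approx_num (r * n - r + 1) T \<le> C * h n"
    and I: "calkin_space I" and hI: "(\<lambda>n. complex_of_real (h (Suc n))) \<in> I"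
  shows "(\<lambda>n. complex_of_real (approx_num (Suc n) T)) \<in> I"
proof -
  let ?H = "\<lambda>n. complex_of_real (h (Suc n))"
  define \<alpha> where "\<alpha> n = complex_of_real C * ?H n" for n
  have aI: "\<alpha> \<in> I" using I hI unfolding calkin_space_def \<alpha>_def by blast
  have c0I: "\<And>x. x \<in> I \<Longrightarrow> x \<in> c0" using I unfolding calkin_space_def by blast
  have a0: "\<alpha> \<longlonglongrightarrow> 0" using c0I[OF aI] unfolding c0_def by simp
  define \<gamma> where "\<gamma> k = \<alpha> (k div r)" for k
  have g0: "\<gamma> \<longlonglongrightarrow> 0" unfolding \<gamma>_def by (rule filterlim_compose[OF a0 div_tendsto[OF r]])
  define aj where "aj j k = (if k mod r = j then \<gamma> k else 0)" for j k
  have ajc0: "aj j \<in> c0" for j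
    unfolding c0_def
    by (rule CollectI, rule Lim_null_comparison[OF _ tendsto_norm_zero[OF g0]]) (simp add: aj_def)
  have ajI: "aj j \<in> I" if j: "j < r" for j
  proof -
    have "decr_rearr (aj j) n = decr_rearr \<alpha> n" for n
    proof -
      have "rset (aj j) n = rset \<alpha> n"
      proof -
        have eqs: "{k. cmod (aj j k) > t} = (\<lambda>q. q * r + j) ` {q. cmod (\<alpha> q) > t}" if t: "t \<ge> 0" for t
        proof (intro equalityI subsetI)
          fix k assume "k \<in> {k. cmod (aj j k) > t}"
          hence k: "k mod r = j" "cmod (\<alpha> (k div r)) > t" using t by (auto simp: aj_def \<gamma>_def split: if_splits)
          have "k = (k div r) * r + j" using k(1) div_mult_mod_eq[of k r] by simp
          thus "k \<in> (\<lambda>q. q * r + j) ` {q. cmod (\<alpha> q) > t}" using k(2) by blast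
        next
          fix k assume "k \<in> (\<lambda>q. q * r + j) ` {q. cmod (\<alpha> q) > t}"
          then obtain q where q: "k = q * r + j" "cmod (\<alpha> q) > t" by blast
          have "k mod r = j" "k div r = q" using q(1) j by simp_all
          thus "k \<in> {k. cmod (aj j k) > t}" using q(2) by (simp add: aj_def \<gamma>_def)
        qed
        have inj: "inj (\<lambda>q. q * r + j)" using r by (auto intro!: injI)
        show ?thesis unfolding rset_def
        proof (rule Collect_cong)
          fix t
          show "(0 \<le> t \<and> finite {k. cmod (aj j k) > t} \<and> card {k. cmod (aj j k) > t} \<le> n) =
                (0 \<le> t \<and> finite {k. cmod (\<alpha> k) > t} \<and> card {k. cmod (\<alpha> k) > t} \<le> n)"
          proof (cases "0 \<le> t")
            case True
            have i: "inj_on (\<lambda>q. q * r + j) {q. cmod (\<alpha> q) > t}" using inj_on_subset[OF inj subset_UNIV] .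
            show ?thesis unfolding eqs[OF True] using finite_image_iff[OF i] card_image[OF i] True by simp
          qed simp
        qed
      qed
      thus ?thesis unfolding decr_rearr_rset by simp
    qed
    thus ?thesis using I aI ajc0[of j] unfolding calkin_space_def by (metis order_refl)
  qed
  have gI: "\<gamma> \<in> I"
  proof -
    have "(\<lambda>k. \<Sum>j\<in>{..<r}. aj j k) \<in> I" by (rule calkin_sum[OF I]) (auto intro: ajI)
    moreover have "(\<lambda>k. \<Sum>j\<in>{..<r}. aj j k) = \<gamma>"
    proof
      fix k
      have "k mod r < r" using r by simp
      thus "(\<Sum>j\<in>{..<r}. aj j k) = \<gamma> k" unfolding aj_def by (simp add: sum.delta)
    qed
    ultimately show ?thesis by simp
  qed
  define \<beta> where "\<beta> n = complex_of_real (approx_num (Suc n) T)" for n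
  have bg: "cmod (\<beta> k) \<le> cmod (\<gamma> k)" for k
  proof -
    let ?n = "Suc (k div r)"
    have idx: "r * ?n - r + 1 = r * (k div r) + 1" by (simp add: algebra_simps)
    have le: "r * (k div r) + 1 \<le> Suc k" by (simp add: mult.commute)
    have "approx_num (Suc k) T \<le> approx_num (r * (k div r) + 1) T"
      by (rule approx_num_mono[OF T _ le]) simp
    also have "\<dots> \<le> C * h ?n" using bd[rule_format, of ?n] idx by simp
    also have "\<dots> \<le> cmod (\<gamma> k)" by (simp add: \<gamma>_def \<alpha>_def norm_mult abs_mult[symmetric])
    finally show ?thesis using approx_num_nonneg[OF T, of "Suc k"] by (simp add: \<beta>_def)
  qed
  have bc0: "\<beta> \<in> c0" unfolding c0_def
    by (rule CollectI, rule Lim_null_comparison[OF _ tendsto_norm_zero[OF g0]]) (simp add: bg)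
  have "\<forall>n. decr_rearr \<beta> n \<le> decr_rearr \<gamma> n" using decr_rearr_mono[OF bc0 c0I[OF gI] bg] by blast
  hence "\<beta> \<in> I" using I gI bc0 unfolding calkin_space_def by blast
  thus ?thesis unfolding \<beta>_def .
qed


definition adm :: "('h::chilbert_space \<Rightarrow> 'h) set \<Rightarrow> (('h \<Rightarrow> 'h) \<Rightarrow> 'k::chilbert_space) \<Rightarrow> ('k \<Rightarrow> ('h \<Rightarrow> 'h)) \<Rightarrow> bool" where
  "adm \<A> P Q \<longleftrightarrow> (\<forall>X\<in>\<A>. \<forall>Y\<in>\<A>. P (\<lambda>h. X h + Y h) = P X + P Y) \<and>
     (\<forall>c. \<forall>X\<in>\<A>. P (\<lambda>h. c *\<^sub>C X h) = c *\<^sub>C P X) \<and>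
     (\<forall>X\<in>\<A>. norm (P X) \<le> onorm X) \<and>
     (\<forall>x. Q x \<in> \<A>) \<and>
     (\<forall>x y. Q (x + y) = (\<lambda>h. Q x h + Q y h)) \<and>
     (\<forall>c x. Q (c *\<^sub>C x) = (\<lambda>h. c *\<^sub>C Q x h)) \<and>
     (\<forall>x. onorm (Q x) \<le> norm x)"

lemma hilbert_num_adm:
  "hilbert_num TYPE('k::chilbert_space) \<A> \<Phi> n = Sup {approx_num n (\<lambda>x::'k. P (\<Phi> (Q x))) | P Q. adm \<A> P Q}"
  unfolding hilbert_num_def adm_def by simp

lemma rank1_bclin: "bounded_clinear (\<lambda>h. cinner a h *\<^sub>C (b::'a::complex_inner))"
proof (rule bclin_intro[where K="norm a * norm b"])
  show "clinear (\<lambda>h. cinner a h *\<^sub>C b)"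
    by (rule clinear_intro) (simp_all add: cinner_add_right cinner_scaleC_right scaleC_add_left scaleC_scaleC)
  fix h
  have "norm (cinner a h *\<^sub>C b) = cmod (cinner a h) * norm b" by (rule norm_scaleC)
  also have "\<dots> \<le> (norm a * norm h) * norm b" by (intro mult_right_mono cauchy_schwarz) simp
  finally show "norm (cinner a h *\<^sub>C b) \<le> norm h * (norm a * norm b)" by (simp add: algebra_simps)
qed

lemma rank1_onorm: "onorm (\<lambda>h. cinner a h *\<^sub>C (b::'a::complex_inner)) \<le> norm a * norm b"
proof (rule onorm_bound)
  fix h
  have "norm (cinner a h *\<^sub>C b) = cmod (cinner a h) * norm b" by (rule norm_scaleC)
  also have "\<dots> \<le> (norm a * norm h) * norm b" by (intro mult_right_mono cauchy_schwarz) simp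
  finally show "norm (cinner a h *\<^sub>C b) \<le> norm a * norm b * norm h" by (simp add: algebra_simps)
qed simp

lemma bl_scaleC_left: "bounded_linear (\<lambda>c::complex. c *\<^sub>C (b::'a::complex_inner))"
proof (rule bounded_linear_intro[where K="norm b"])
  fix x y :: complex and r :: real
  show "(x + y) *\<^sub>C b = x *\<^sub>C b + y *\<^sub>C b" by (rule scaleC_add_left)
  show "(r *\<^sub>R x) *\<^sub>C b = r *\<^sub>R (x *\<^sub>C b)" by (simp add: scaleR_scaleC scaleC_scaleC scaleR_conv_of_real)
  show "norm (x *\<^sub>C b) \<le> norm x * norm b" by (simp add: norm_scaleC)
qed

lemma rank1_compact: "compact_op (\<lambda>h. cinner a h *\<^sub>C (b::'a::chilbert_space))"
  unfolding compact_op_def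
proof (intro conjI rank1_bclin)
  define K where "K = (\<lambda>c. c *\<^sub>C b) ` cball (0::complex) (norm a)"
  have cK: "compact K" unfolding K_def
    by (rule compact_continuous_image[OF linear_continuous_on[OF bl_scaleC_left] compact_cball])
  have sub: "(\<lambda>h. cinner a h *\<^sub>C b) ` cball 0 1 \<subseteq> K"
  proof
    fix y assume "y \<in> (\<lambda>h. cinner a h *\<^sub>C b) ` cball 0 1"
    then obtain h where h: "norm h \<le> 1" "y = cinner a h *\<^sub>C b" by auto
    have "cmod (cinner a h) \<le> norm a * norm h" by (rule cauchy_schwarz)
    also have "\<dots> \<le> norm a" using h(1) by (simp add: mult_left_le)
    finally show "y \<in> K" unfolding K_def using h(2) by auto
  qed
  have "closure ((\<lambda>h. cinner a h *\<^sub>C b) ` cball 0 1) \<subseteq> K"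
    by (rule closure_minimal[OF sub compact_imp_closed[OF cK]])
  hence e: "closure ((\<lambda>h. cinner a h *\<^sub>C b) ` cball 0 1) = K \<inter> closure ((\<lambda>h. cinner a h *\<^sub>C b) ` cball 0 1)" by blast
  show "compact (closure ((\<lambda>h. cinner a h *\<^sub>C b) ` cball 0 1))"
    by (subst e) (rule compact_Int_closed[OF cK closed_closure])
qed

lemma fn_replicate0: "fn (replicate k (0, x)) X = 0"
  by (induction k) (simp_all add: fn_def)

lemma norm_data:
  fixes T :: "nat \<Rightarrow> 'a \<Rightarrow> 'a::complex_inner"
  assumes ind: "clin_indep_ops m T" and lin: "\<And>j. j < m \<Longrightarrow> clinear (T j)"
  shows "\<exists>(r::nat) (M::real) ee ff. r \<ge> 1 \<and> M \<ge> 1 \<and> (\<forall>i<m. \<forall>k<r. norm (ee i k) \<le> 1 \<and> norm (ff i k) \<le> 1) \<and>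
     (\<forall>i<m. \<forall>j<m. (\<Sum>k<r. cinner (ee i k) (T j (ff i k))) = complex_of_real (1 / M\<^sup>2) * (if j = i then 1 else 0))"
proof -
  have "\<forall>i. \<exists>ps. i < m \<longrightarrow> (\<forall>j<m. fn ps (T j) = (if j = i then 1 else 0))"
    using dual_basis[OF ind] by blast
  then obtain ps where ps: "\<And>i j. i < m \<Longrightarrow> j < m \<Longrightarrow> fn (ps i) (T j) = (if j = i then 1 else 0)"
    by metis
  define r where "r = Suc (\<Sum>i<m. length (ps i))"
  have lr: "length (ps i) \<le> r" if "i < m" for i
  proof -
    have "length (ps i) \<le> (\<Sum>i<m. length (ps i))" using that by (intro member_le_sum) auto
    thus ?thesis by (simp add: r_def)
  qed
  define ps' where "ps' i = ps i @ replicate (r - length (ps i)) (0, 0)" for i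
  have len: "length (ps' i) = r" if "i < m" for i using lr[OF that] by (simp add: ps'_def)
  have fps': "fn (ps' i) X = fn (ps i) X" for i X by (simp add: ps'_def fn_append fn_replicate0)
  define M where "M = 1 + (\<Sum>i<m. \<Sum>k<r. norm (fst (ps' i ! k)) + norm (snd (ps' i ! k)))"
  have M1: "M \<ge> 1" unfolding M_def by (simp add: sum_nonneg)
  have Mb: "norm (fst (ps' i ! k)) \<le> M \<and> norm (snd (ps' i ! k)) \<le> M" if "i < m" "k < r" for i k
  proof -
    have "norm (fst (ps' i ! k)) + norm (snd (ps' i ! k)) \<le> (\<Sum>k<r. norm (fst (ps' i ! k)) + norm (snd (ps' i ! k)))"
      using that by (intro member_le_sum) auto
    also have "\<dots> \<le> (\<Sum>i<m. \<Sum>k<r. norm (fst (ps' i ! k)) + norm (snd (ps' i ! k)))"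
      using that by (intro member_le_sum[where f="\<lambda>i. \<Sum>k<r. norm (fst (ps' i ! k)) + norm (snd (ps' i ! k))"])
        (auto intro: sum_nonneg)
    finally have "norm (fst (ps' i ! k)) + norm (snd (ps' i ! k)) \<le> M - 1" unfolding M_def by simp
    moreover have "0 \<le> norm (fst (ps' i ! k))" "0 \<le> norm (snd (ps' i ! k))" by simp_all
    ultimately show ?thesis by linarith
  qed
  define s where "s = complex_of_real (1 / M)"
  define ee where "ee i k = s *\<^sub>C fst (ps' i ! k)" for i k
  define ff where "ff i k = s *\<^sub>C snd (ps' i ! k)" for i k
  have cm: "cmod s = 1 / M" using M1 by (simp add: s_def norm_divide)
  have nb: "norm (ee i k) \<le> 1 \<and> norm (ff i k) \<le> 1" if "i < m" "k < r" for i k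
    using Mb[OF that] M1 by (simp add: ee_def ff_def norm_scaleC cm field_simps)
  have sums: "(\<Sum>k<r. cinner (ee i k) (T j (ff i k))) = complex_of_real (1 / M\<^sup>2) * (if j = i then 1 else 0)"
    if i: "i < m" and j: "j < m" for i j
  proof -
    have "(\<Sum>k<r. cinner (ee i k) (T j (ff i k))) = (\<Sum>k<r. (cnj s * s) * cinner (fst (ps' i ! k)) (T j (snd (ps' i ! k))))"
      by (intro sum.cong refl) (simp add: ee_def ff_def clinear_scaleC[OF lin[OF j]] cinner_scaleC_left cinner_scaleC_right mult.assoc)
    also have "\<dots> = (cnj s * s) * fn (ps' i) (T j)"
      by (simp add: fn_nth len[OF i] sum_distrib_left)
    also have "cnj s * s = complex_of_real (1 / M\<^sup>2)" by (simp add: s_def power2_eq_square)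
    finally show ?thesis by (simp add: fps' ps[OF i j])
  qed
  have r1: "r \<ge> 1" by (simp add: r_def)
  show ?thesis
    apply (rule exI[of _ r], rule exI[of _ M], rule exI[of _ ee], rule exI[of _ ff])
    using r1 M1 nb sums by blast
qed

locale eo =
  fixes \<A> :: "('h::chilbert_space \<Rightarrow> 'h) set" and A B :: "nat \<Rightarrow> 'h \<Rightarrow> 'h" and m :: nat
  assumes alg: "cstar_subalgebra \<A>" and AB: "\<forall>i<m. A i \<in> \<A> \<and> B i \<in> \<A>"
begin

lemma mem_bclin: "X \<in> \<A> \<Longrightarrow> bounded_clinear X"
  using alg unfolding cstar_subalgebra_def by blast

lemma A_bclin: "i < m \<Longrightarrow> bounded_clinear (A i)" using AB mem_bclin by blast
lemma B_bclin: "i < m \<Longrightarrow> bounded_clinear (B i)" using AB mem_bclin by blast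

lemma Phi_mem: assumes X: "X \<in> \<A>" shows "elem_op m A B X \<in> \<A>"
proof -
  have "(\<lambda>x. \<Sum>i<m'. A i (X (B i x))) \<in> \<A>" if "m' \<le> m" for m'
    using that
  proof (induction m')
    case 0
    have "(\<lambda>_. 0) \<in> \<A>" using alg unfolding cstar_subalgebra_def by blast
    thus ?case by simp
  next
    case (Suc m')
    have A1: "A m' \<in> \<A>" "B m' \<in> \<A>" using AB Suc.prems by auto
    have c1: "X \<circ> B m' \<in> \<A>" using alg X A1 unfolding cstar_subalgebra_def by blast
    have c2: "A m' \<circ> (X \<circ> B m') \<in> \<A>" using alg c1 A1 unfolding cstar_subalgebra_def by blast
    have add: "\<forall>S\<in>\<A>. \<forall>T\<in>\<A>. (\<lambda>x. S x + T x) \<in> \<A>" using alg unfolding cstar_subalgebra_def by blast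
    have ih: "(\<lambda>x. \<Sum>i<m'. A i (X (B i x))) \<in> \<A>" using Suc by simp
    have "(\<lambda>x. (\<lambda>x. \<Sum>i<m'. A i (X (B i x))) x + (A m' \<circ> (X \<circ> B m')) x) \<in> \<A>"
      by (rule add[rule_format, OF ih c2])
    thus ?case by (simp add: o_def)
  qed
  thus ?thesis unfolding elem_op_def by simp
qed

lemma Phi_add: "elem_op m A B (\<lambda>h. X h + Y h) = (\<lambda>h. elem_op m A B X h + elem_op m A B Y h)"
  unfolding elem_op_def
  by (rule ext) (simp add: clinear_add[OF bclin_clinear[OF A_bclin]] sum.distrib)

lemma Phi_scale: "elem_op m A B (\<lambda>h. c *\<^sub>C X h) = (\<lambda>h. c *\<^sub>C elem_op m A B X h)"
  unfolding elem_op_def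
  by (rule ext) (simp add: clinear_scaleC[OF bclin_clinear[OF A_bclin]] scaleC_sum_right)

definition K where "K = (\<Sum>i<m. onorm (A i) * onorm (B i))"

lemma K_nonneg: "K \<ge> 0"
  unfolding K_def by (intro sum_nonneg) (simp add: bclin_onorm_nonneg A_bclin B_bclin)

lemma Phi_onorm: assumes X: "bounded_clinear X" shows "onorm (elem_op m A B X) \<le> K * onorm X"
proof -
  have "onorm (elem_op m A B X) = onorm (\<lambda>x. \<Sum>i\<in>{..<m}. A i (X (B i x)))" unfolding elem_op_def ..
  also have "\<dots> \<le> (\<Sum>i\<in>{..<m}. onorm (\<lambda>x. A i (X (B i x))))"
    by (rule onorm_sum) (auto intro!: bclin_linear bclin_comp[OF A_bclin bclin_comp[OF X B_bclin]])
  also have "\<dots> \<le> (\<Sum>i\<in>{..<m}. onorm (A i) * onorm X * onorm (B i))"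
    by (intro sum_mono) (simp add: onorm_comp3_le[OF A_bclin X B_bclin])
  also have "\<dots> = K * onorm X" unfolding K_def sum_distrib_right by (simp add: algebra_simps)
  finally show ?thesis .
qed

lemma adm_bclin:
  assumes a: "adm \<A> P Q"
  shows "bounded_clinear (\<lambda>x. P (elem_op m A B (Q x)))"
proof (rule bclin_intro[where K=K])
  have Qm: "Q x \<in> \<A>" for x using a unfolding adm_def by blast
  show "clinear (\<lambda>x. P (elem_op m A B (Q x)))"
  proof (rule clinear_intro)
    fix x y
    have "Q (x + y) = (\<lambda>h. Q x h + Q y h)" using a unfolding adm_def by blast
    hence "P (elem_op m A B (Q (x + y))) = P (\<lambda>h. elem_op m A B (Q x) h + elem_op m A B (Q y) h)"
      by (simp add: Phi_add)
    also have "\<dots> = P (elem_op m A B (Q x)) + P (elem_op m A B (Q y))"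
      using a Phi_mem[OF Qm] unfolding adm_def by blast
    finally show "P (elem_op m A B (Q (x + y))) = P (elem_op m A B (Q x)) + P (elem_op m A B (Q y))" .
  next
    fix c x
    have "Q (c *\<^sub>C x) = (\<lambda>h. c *\<^sub>C Q x h)" using a unfolding adm_def by blast
    hence "P (elem_op m A B (Q (c *\<^sub>C x))) = P (\<lambda>h. c *\<^sub>C elem_op m A B (Q x) h)"
      by (simp add: Phi_scale)
    also have "\<dots> = c *\<^sub>C P (elem_op m A B (Q x))"
      using a Phi_mem[OF Qm] unfolding adm_def by blast
    finally show "P (elem_op m A B (Q (c *\<^sub>C x))) = c *\<^sub>C P (elem_op m A B (Q x))" .
  qed
  fix x
  have "norm (P (elem_op m A B (Q x))) \<le> onorm (elem_op m A B (Q x))"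
    using a Phi_mem[OF Qm] unfolding adm_def by blast
  also have "\<dots> \<le> K * onorm (Q x)" by (rule Phi_onorm[OF mem_bclin[OF Qm]])
  also have "\<dots> \<le> K * norm x" using a K_nonneg unfolding adm_def by (simp add: mult_left_mono)
  finally show "norm (P (elem_op m A B (Q x))) \<le> norm x * K" by (simp add: mult.commute)
qed

lemma adm_onorm:
  assumes a: "adm \<A> P Q"
  shows "onorm (\<lambda>x. P (elem_op m A B (Q x))) \<le> K"
proof (rule onorm_bound[OF K_nonneg])
  fix x
  have Qm: "Q x \<in> \<A>" using a unfolding adm_def by blast
  have "norm (P (elem_op m A B (Q x))) \<le> onorm (elem_op m A B (Q x))"
    using a Phi_mem[OF Qm] unfolding adm_def by blast
  also have "\<dots> \<le> K * onorm (Q x)" by (rule Phi_onorm[OF mem_bclin[OF Qm]])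
  also have "\<dots> \<le> K * norm x" using a K_nonneg unfolding adm_def by (simp add: mult_left_mono)
  finally show "norm (P (elem_op m A B (Q x))) \<le> K * norm x" .
qed

lemma adm_le_hn:
  fixes P :: "('h \<Rightarrow> 'h) \<Rightarrow> 'k::chilbert_space"
  assumes a: "adm \<A> P Q" and n: "n \<ge> 1"
  shows "approx_num n (\<lambda>x. P (elem_op m A B (Q x))) \<le> hilbert_num TYPE('k) \<A> (elem_op m A B) n"
  unfolding hilbert_num_adm
proof (rule cSup_upper)
  show "approx_num n (\<lambda>x. P (elem_op m A B (Q x))) \<in> {approx_num n (\<lambda>x::'k. P (elem_op m A B (Q x))) |P Q. adm \<A> P Q}"
    using a by blast
  show "bdd_above {approx_num n (\<lambda>x::'k. P (elem_op m A B (Q x))) |P Q. adm \<A> P Q}"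
    unfolding bdd_above_def
  proof (intro exI[of _ K] ballI)
    fix y assume "y \<in> {approx_num n (\<lambda>x::'k. P (elem_op m A B (Q x))) |P Q. adm \<A> P Q}"
    then obtain P' :: "('h \<Rightarrow> 'h) \<Rightarrow> 'k" and Q' where y: "y = approx_num n (\<lambda>x. P' (elem_op m A B (Q' x)))" "adm \<A> P' Q'"
      by blast
    have "y \<le> onorm (\<lambda>x. P' (elem_op m A B (Q' x)))" unfolding y(1)
      by (rule approx_num_le_onorm[OF adm_bclin[OF y(2)] n])
    also have "\<dots> \<le> K" by (rule adm_onorm[OF y(2)])
    finally show "y \<le> K" .
  qed
qed

lemma family_bound:
  fixes P :: "nat \<Rightarrow> ('h \<Rightarrow> 'h) \<Rightarrow> 'k::chilbert_space" and Q :: "nat \<Rightarrow> 'k \<Rightarrow> ('h \<Rightarrow> 'h)"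
    and S :: "'k \<Rightarrow> 'h" and U :: "'h \<Rightarrow> 'k"
  assumes a: "\<And>k. k < r \<Longrightarrow> adm \<A> (P k) (Q k)" and r: "r \<ge> 1" and n: "n \<ge> 1"
    and S: "bounded_clinear S" and U: "bounded_clinear U"
    and eq: "\<And>x. X x = S (\<Sum>k<r. P k (elem_op m A B (Q k (U x))))"
  shows "approx_num (r * n - r + 1) X \<le> onorm S * onorm U * (real r * hilbert_num TYPE('k) \<A> (elem_op m A B) n)"
proof -
  let ?h = "hilbert_num TYPE('k) \<A> (elem_op m A B) n"
  define T where "T k x = P k (elem_op m A B (Q k x))" for k x
  have T: "bounded_clinear (T k)" if "k < r" for k unfolding T_def by (rule adm_bclin[OF a[OF that]])
  have Ts: "bounded_clinear (\<lambda>x. \<Sum>k<r. T k x)" by (rule bclin_sum) (auto intro: T)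
  have Xe: "X = (\<lambda>x. S ((\<lambda>y. \<Sum>k<r. T k y) (U x)))" by (rule ext) (simp add: eq T_def)
  have N: "r * n - r + 1 \<ge> 1" by simp
  have "approx_num (r * n - r + 1) X \<le> onorm S * approx_num (r * n - r + 1) (\<lambda>x. \<Sum>k<r. T k x) * onorm U"
    unfolding Xe by (rule approx_num_comp[OF S Ts U N])
  also have "approx_num (r * n - r + 1) (\<lambda>x. \<Sum>k<r. T k x) \<le> (\<Sum>k<r. approx_num n (T k))"
    by (rule approx_num_sum[OF T n]) simp
  also have "\<dots> \<le> (\<Sum>k<r. ?h)"
    by (intro sum_mono) (unfold T_def, rule adm_le_hn[OF a n], simp)
  also have "\<dots> = real r * ?h" by simp
  finally have "approx_num (r * n - r + 1) X \<le> onorm S * (real r * ?h) * onorm U"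
    by (simp add: mult_left_mono mult_right_mono bclin_onorm_nonneg S U)
  thus ?thesis by (simp add: algebra_simps)
qed

lemma hn_nonneg:
  fixes P :: "('h \<Rightarrow> 'h) \<Rightarrow> 'k::chilbert_space"
  assumes a: "adm \<A> P Q" and n: "n \<ge> 1"
  shows "0 \<le> hilbert_num TYPE('k) \<A> (elem_op m A B) n"
  using approx_num_nonneg[OF adm_bclin[OF a] n] adm_le_hn[OF a n] by linarith

end


lemma sqs_scale_right: "sqs c \<Longrightarrow> sqs (\<lambda>n. c n * a)"
  using sqs_scale[of c a] by (simp add: mult.commute)

context eo begin

lemma bases:
  assumes sep: "separable_type TYPE('h)" and kinf: "\<not> cfinite_dim TYPE('k::chilbert_space)"
  obtains e :: "nat \<Rightarrow> 'h" and u :: "nat \<Rightarrow> 'k::chilbert_space" where "ofam e" "ototal e" "ofam u" "\<And>n. u n \<noteq> 0"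
proof -
  obtain D :: "'h set" where D: "countable D" "closure D = UNIV" using sep unfolding separable_type_def by blast
  obtain e :: "nat \<Rightarrow> 'h" where e: "ofam e" "ototal e" using separable_total[OF D] by blast
  obtain u :: "nat \<Rightarrow> 'k" where u: "ofam u" "\<And>n. u n \<noteq> 0" using infinite_onseq[OF kinf] by blast
  show ?thesis using that e u by blast
qed

lemma emb:
  fixes e :: "nat \<Rightarrow> 'h" and u :: "nat \<Rightarrow> 'k::chilbert_space"
  assumes e: "ofam e" "ototal e" and u: "ofam u" "\<And>n. u n \<noteq> 0"
  shows "bounded_clinear (xfer e u)" "onorm (xfer e u) \<le> 1"
        "bounded_clinear (xfer u e)" "onorm (xfer u e) \<le> 1" "\<And>x. xfer u e (xfer e u x) = x"
  using xfer_bclin[OF e(1) u(1)] xfer_onorm[OF e(1) u(1)] xfer_bclin[OF u(1) e(1)] xfer_onorm[OF u(1) e(1)]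
    xfer_inv[OF e u] by auto

lemma scaler_op:
  fixes W :: "'k::chilbert_space \<Rightarrow> 'h"
  assumes W: "bounded_clinear W" "onorm W \<le> 1" and M: "M \<ge> 0"
  shows "bounded_clinear (\<lambda>y. W (complex_of_real M *\<^sub>C y))" "onorm (\<lambda>y. W (complex_of_real M *\<^sub>C y)) \<le> M"
proof -
  show "bounded_clinear (\<lambda>y. W (complex_of_real M *\<^sub>C y))"
    by (rule bclin_comp[OF W(1) bclin_scale[OF bclin_id]])
  show "onorm (\<lambda>y. W (complex_of_real M *\<^sub>C y)) \<le> M"
  proof (rule onorm_bound[OF M])
    fix y
    have "norm (W (complex_of_real M *\<^sub>C y)) \<le> onorm W * norm (complex_of_real M *\<^sub>C y)" by (rule bclin_onorm[OF W(1)])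
    also have "\<dots> \<le> 1 * norm (complex_of_real M *\<^sub>C y)" by (intro mult_right_mono W(2)) simp
    also have "\<dots> = M * norm y" using M by (simp add: norm_scaleC)
    finally show "norm (W (complex_of_real M *\<^sub>C y)) \<le> M * norm y" .
  qed
qed

lemma partA:
  assumes sep: "separable_type TYPE('h)" and cpt: "{T. compact_op T} \<subseteq> \<A>"
    and kinf: "\<not> cfinite_dim TYPE('k::chilbert_space)" and ind: "clin_indep_ops m B"
  shows "\<exists>r C. r \<ge> 1 \<and> C > 0 \<and> (\<forall>n\<ge>1. \<forall>i<m. approx_num (r * n - r + 1) (A i)
            \<le> C * hilbert_num TYPE('k) \<A> (elem_op m A B) n)"
proof -
  obtain e :: "nat \<Rightarrow> 'h" and u :: "nat \<Rightarrow> 'k" where e: "ofam e" "ototal e" and u: "ofam u" "\<And>n. u n \<noteq> 0"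
    using bases[OF sep kinf] by blast
  define V where "V = xfer e u"
  define W where "W = xfer u e"
  note VW = emb[OF e u, folded V_def W_def]
  have linB: "\<And>j. j < m \<Longrightarrow> clinear (B j)" by (rule bclin_clinear[OF B_bclin])
  obtain r :: nat and M :: real and ee ff where r: "r \<ge> 1" and M: "M \<ge> 1"
    and nb: "\<forall>i<m. \<forall>k<r. norm (ee i k) \<le> 1 \<and> norm (ff i k) \<le> 1"
    and sm: "\<forall>i<m. \<forall>j<m. (\<Sum>k<r. cinner (ee i k) (B j (ff i k))) = complex_of_real (1 / M\<^sup>2) * (if j = i then 1 else 0)"
    using norm_data[OF ind linB] by blast
  define S where "S y = W (complex_of_real (M\<^sup>2) *\<^sub>C y)" for y
  have S: "bounded_clinear S" "onorm S \<le> M\<^sup>2" unfolding S_def using scaler_op[OF VW(3,4), of "M\<^sup>2"] by auto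
  define P where "P i k Y = V (Y (ff i k))" for i k and Y :: "'h \<Rightarrow> 'h"
  define Q where "Q i k x = (\<lambda>h. cinner (ee i k) h *\<^sub>C W x)" for i k x
  have adm: "adm \<A> (P i k) (Q i k)" if ik: "i < m" "k < r" for i k
    unfolding adm_def
  proof (intro conjI ballI allI)
    fix X Y assume "X \<in> \<A>" "Y \<in> \<A>"
    show "P i k (\<lambda>h. X h + Y h) = P i k X + P i k Y"
      unfolding P_def by (rule clinear_add[OF bclin_clinear[OF VW(1)]])
  next
    fix c X assume "X \<in> \<A>"
    show "P i k (\<lambda>h. c *\<^sub>C X h) = c *\<^sub>C P i k X"
      unfolding P_def by (rule clinear_scaleC[OF bclin_clinear[OF VW(1)]])
  next
    fix X assume X: "X \<in> \<A>"
    have "norm (P i k X) \<le> onorm V * norm (X (ff i k))" unfolding P_def by (rule bclin_onorm[OF VW(1)])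
    also have "\<dots> \<le> 1 * norm (X (ff i k))" by (intro mult_right_mono VW(2)) simp
    also have "\<dots> \<le> onorm X * norm (ff i k)" using bclin_onorm[OF mem_bclin[OF X]] by simp
    also have "\<dots> \<le> onorm X * 1" using nb ik by (intro mult_left_mono bclin_onorm_nonneg[OF mem_bclin[OF X]]) auto
    finally show "norm (P i k X) \<le> onorm X" by simp
  next
    fix x show "Q i k x \<in> \<A>" using cpt rank1_compact unfolding Q_def by blast
  next
    fix x y show "Q i k (x + y) = (\<lambda>h. Q i k x h + Q i k y h)"
      unfolding Q_def by (simp add: clinear_add[OF bclin_clinear[OF VW(3)]] scaleC_add_right)
  next
    fix c x show "Q i k (c *\<^sub>C x) = (\<lambda>h. c *\<^sub>C Q i k x h)"
      unfolding Q_def by (simp add: clinear_scaleC[OF bclin_clinear[OF VW(3)]] scaleC_scaleC mult.commute)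
  next
    fix x
    have "onorm (Q i k x) \<le> norm (ee i k) * norm (W x)" unfolding Q_def by (rule rank1_onorm)
    also have "\<dots> \<le> 1 * norm x"
    proof (rule mult_mono)
      show "norm (ee i k) \<le> 1" using nb ik by auto
      have "norm (W x) \<le> onorm W * norm x" by (rule bclin_onorm[OF VW(3)])
      also have "\<dots> \<le> 1 * norm x" by (intro mult_right_mono VW(4)) simp
      finally show "norm (W x) \<le> norm x" by simp
    qed simp_all
    finally show "onorm (Q i k x) \<le> norm x" by simp
  qed
  have eq: "A i x = S (\<Sum>k<r. P i k (elem_op m A B (Q i k (V x))))" if i: "i < m" for i x
  proof -
    have "(\<Sum>k<r. P i k (elem_op m A B (Q i k (V x)))) =
          (\<Sum>k<r. V (\<Sum>j<m. cinner (ee i k) (B j (ff i k)) *\<^sub>C A j x))"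
      unfolding P_def Q_def elem_op_def
      by (intro sum.cong refl) (simp add: VW(5) clinear_scaleC[OF bclin_clinear[OF A_bclin]])
    also have "\<dots> = V (\<Sum>k<r. \<Sum>j<m. cinner (ee i k) (B j (ff i k)) *\<^sub>C A j x)"
      by (rule clinear_sum[OF bclin_clinear[OF VW(1)], symmetric])
    also have "(\<Sum>k<r. \<Sum>j<m. cinner (ee i k) (B j (ff i k)) *\<^sub>C A j x) =
               (\<Sum>j<m. (\<Sum>k<r. cinner (ee i k) (B j (ff i k))) *\<^sub>C A j x)"
      by (subst sum.swap) (simp add: scaleC_sum_left)
    also have "\<dots> = (\<Sum>j<m. (complex_of_real (1 / M\<^sup>2) * (if j = i then 1 else 0)) *\<^sub>C A j x)"
      using sm i by (intro sum.cong refl) auto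
    also have "\<dots> = (\<Sum>j<m. if j = i then complex_of_real (1 / M\<^sup>2) *\<^sub>C A j x else 0)"
      by (intro sum.cong refl) simp
    also have "\<dots> = complex_of_real (1 / M\<^sup>2) *\<^sub>C A i x"
      using i sum.delta[of "{..<m}" i "\<lambda>j. complex_of_real (1 / M\<^sup>2) *\<^sub>C A j x"] by simp
    finally have 1: "(\<Sum>k<r. P i k (elem_op m A B (Q i k (V x)))) = V (complex_of_real (1 / M\<^sup>2) *\<^sub>C A i x)" .
    have "S (V (complex_of_real (1 / M\<^sup>2) *\<^sub>C A i x)) = W (V (A i x))"
      unfolding S_def using M
      by (simp add: clinear_scaleC[OF bclin_clinear[OF VW(1)]] scaleC_scaleC scaleC_one
          of_real_mult[symmetric] del: of_real_mult)
    also have "\<dots> = A i x" by (rule VW(5))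
    finally show ?thesis using 1 by simp
  qed
  show ?thesis
  proof (intro exI conjI allI impI)
    show "r \<ge> 1" by (rule r)
    show "M\<^sup>2 * real r > 0" using M r by simp
    fix n i :: nat assume n: "n \<ge> 1" and i: "i < m"
    have a0: "adm \<A> (P i 0) (Q i 0)" using adm[of i 0] i r by simp
    have h0: "0 \<le> hilbert_num TYPE('k) \<A> (elem_op m A B) n"
      by (rule hn_nonneg[OF a0 n])
    have "approx_num (r * n - r + 1) (A i) \<le> onorm S * onorm V * (real r * hilbert_num TYPE('k) \<A> (elem_op m A B) n)"
      by (rule family_bound[OF adm[OF i] r n S(1) VW(1) eq[OF i]])
    also have "\<dots> \<le> M\<^sup>2 * 1 * (real r * hilbert_num TYPE('k) \<A> (elem_op m A B) n)"
      by (intro mult_right_mono mult_mono S(2) VW(2)) (simp_all add: h0 bclin_onorm_nonneg VW(1))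
    finally show "approx_num (r * n - r + 1) (A i) \<le> M\<^sup>2 * real r * hilbert_num TYPE('k) \<A> (elem_op m A B) n"
      by (simp add: algebra_simps)
  qed
qed


lemma partB:
  assumes sep: "separable_type TYPE('h)" and cpt: "{T. compact_op T} \<subseteq> \<A>"
    and kinf: "\<not> cfinite_dim TYPE('k::chilbert_space)" and ind: "clin_indep_ops m A"
  shows "\<exists>r C. r \<ge> 1 \<and> C > 0 \<and> (\<forall>n\<ge>1. \<forall>i<m. approx_num (r * n - r + 1) (B i)
            \<le> C * hilbert_num TYPE('k) \<A> (elem_op m A B) n)"
proof -
  obtain e :: "nat \<Rightarrow> 'h" and u :: "nat \<Rightarrow> 'k" where e: "ofam e" "ototal e" and u: "ofam u" "\<And>n. u n \<noteq> 0"
    using bases[OF sep kinf] by blast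
  define V where "V = xfer e u"
  define W where "W = xfer u e"
  note VW = emb[OF e u, folded V_def W_def]
  have linA: "\<And>j. j < m \<Longrightarrow> clinear (A j)" by (rule bclin_clinear[OF A_bclin])
  obtain r :: nat and M :: real and ee ff where r: "r \<ge> 1" and M: "M \<ge> 1"
    and nb: "\<forall>i<m. \<forall>k<r. norm (ee i k) \<le> 1 \<and> norm (ff i k) \<le> 1"
    and sm: "\<forall>i<m. \<forall>j<m. (\<Sum>k<r. cinner (ee i k) (A j (ff i k))) = complex_of_real (1 / M\<^sup>2) * (if j = i then 1 else 0)"
    using norm_data[OF ind linA] by blast
  define S where "S y = W (complex_of_real (M\<^sup>2) *\<^sub>C y)" for y
  have S: "bounded_clinear S" "onorm S \<le> M\<^sup>2" unfolding S_def using scaler_op[OF VW(3,4), of "M\<^sup>2"] by auto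
  define P where "P i k Y = ser u (\<lambda>n. cinner (ee i k) (Y (e n)))" for i k and Y :: "'h \<Rightarrow> 'h"
  define Q where "Q i k x = (\<lambda>h. cinner (kap e (W x)) h *\<^sub>C ff i k)" for i k x
  have adm: "adm \<A> (P i k) (Q i k)" if ik: "i < m" "k < r" for i k
    unfolding adm_def
  proof (intro conjI ballI allI)
    fix X Y assume X: "X \<in> \<A>" and Y: "Y \<in> \<A>"
    show "P i k (\<lambda>h. X h + Y h) = P i k X + P i k Y"
      unfolding P_def cinner_add_right
      by (rule ser_add[OF u(1) sqs_coef[OF mem_bclin[OF X] e(1)] sqs_coef[OF mem_bclin[OF Y] e(1)]])
  next
    fix c X assume X: "X \<in> \<A>"
    show "P i k (\<lambda>h. c *\<^sub>C X h) = c *\<^sub>C P i k X"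
      unfolding P_def cinner_scaleC_right
      by (rule ser_scale[OF u(1) sqs_coef[OF mem_bclin[OF X] e(1)]])
  next
    fix X assume X: "X \<in> \<A>"
    have Xb: "bounded_clinear X" by (rule mem_bclin[OF X])
    show "norm (P i k X) \<le> onorm X"
      unfolding P_def
    proof (rule ser_norm_le[OF u(1)])
      fix N
      have "(\<Sum>n<N. (cmod (cinner (ee i k) (X (e n))))\<^sup>2) \<le> (onorm X * norm (ee i k))\<^sup>2"
        by (rule coef_bound[OF Xb e(1)])
      also have "\<dots> \<le> (onorm X)\<^sup>2"
        using nb ik bclin_onorm_nonneg[OF Xb] by (intro power_mono) (auto simp: mult_left_le)
      finally show "(\<Sum>n<N. (cmod (cinner (ee i k) (X (e n))))\<^sup>2) \<le> (onorm X)\<^sup>2" .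
      show "0 \<le> onorm X" by (rule bclin_onorm_nonneg[OF Xb])
    qed
  next
    fix x show "Q i k x \<in> \<A>" using cpt rank1_compact unfolding Q_def by blast
  next
    fix x y show "Q i k (x + y) = (\<lambda>h. Q i k x h + Q i k y h)"
      unfolding Q_def by (simp add: clinear_add[OF bclin_clinear[OF VW(3)]] kap_add[OF e(1)] cinner_add_left scaleC_add_left)
  next
    fix c x show "Q i k (c *\<^sub>C x) = (\<lambda>h. c *\<^sub>C Q i k x h)"
      unfolding Q_def by (simp add: clinear_scaleC[OF bclin_clinear[OF VW(3)]] kap_scale[OF e(1)] cinner_scaleC_left scaleC_scaleC)
  next
    fix x
    have "onorm (Q i k x) \<le> norm (kap e (W x)) * norm (ff i k)" unfolding Q_def by (rule rank1_onorm)
    also have "\<dots> \<le> norm x * 1"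
    proof (rule mult_mono)
      show "norm (ff i k) \<le> 1" using nb ik by auto
      have "norm (kap e (W x)) \<le> norm (W x)" by (rule kap_norm[OF e(1)])
      also have "\<dots> \<le> onorm W * norm x" by (rule bclin_onorm[OF VW(3)])
      also have "\<dots> \<le> 1 * norm x" by (intro mult_right_mono VW(4)) simp
      finally show "norm (kap e (W x)) \<le> norm x" by simp
    qed simp_all
    finally show "onorm (Q i k x) \<le> norm x" by simp
  qed
  have eq: "trn e (B i) x = S (\<Sum>k<r. P i k (elem_op m A B (Q i k (V x))))" if i: "i < m" for i x
  proof -
    define z where "z = kap e x"
    define c where "c = complex_of_real (1 / M\<^sup>2)"
    have sqsj: "sqs (\<lambda>n. cinner z (B j (e n)))" if "j < m" for j by (rule sqs_coef[OF B_bclin[OF that] e(1)])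
    have sqsk: "sqs (\<lambda>n. \<Sum>j<m. cinner z (B j (e n)) * cinner (ee i k) (A j (ff i k)))" for k
      by (rule sqs_sum) (rule sqs_scale_right[OF sqsj], simp)
    have "(\<Sum>k<r. P i k (elem_op m A B (Q i k (V x)))) =
          (\<Sum>k<r. ser u (\<lambda>n. \<Sum>j<m. cinner z (B j (e n)) * cinner (ee i k) (A j (ff i k))))"
      unfolding P_def Q_def elem_op_def z_def
      by (intro sum.cong refl arg_cong[where f="ser u"] ext)
         (simp add: VW(5) clinear_scaleC[OF bclin_clinear[OF A_bclin]] cinner_sum_right cinner_scaleC_right)
    also have "\<dots> = ser u (\<lambda>n. \<Sum>k<r. \<Sum>j<m. cinner z (B j (e n)) * cinner (ee i k) (A j (ff i k)))"
      by (rule ser_sum[OF u(1) sqsk, symmetric])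
    also have "(\<lambda>n. \<Sum>k<r. \<Sum>j<m. cinner z (B j (e n)) * cinner (ee i k) (A j (ff i k))) =
               (\<lambda>n. \<Sum>j<m. cinner z (B j (e n)) * (\<Sum>k<r. cinner (ee i k) (A j (ff i k))))"
      by (rule ext) (subst sum.swap, simp add: sum_distrib_left)
    also have "\<dots> = (\<lambda>n. \<Sum>j<m. if j = i then c * cinner z (B i (e n)) else 0)"
      using sm i by (intro ext sum.cong refl) (auto simp: c_def)
    also have "\<dots> = (\<lambda>n. c * cinner z (B i (e n)))" using i by simp
    also have "ser u \<dots> = c *\<^sub>C ser u (\<lambda>n. cinner z (B i (e n)))" by (rule ser_scale[OF u(1) sqsj[OF i]])
    also have "ser u (\<lambda>n. cinner z (B i (e n))) = V (trn e (B i) x)"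
    proof -
      have "V (trn e (B i) x) = ser u (\<lambda>n. cinner (e n) (trn e (B i) x))" unfolding V_def xfer_def ..
      also have "\<dots> = ser u (\<lambda>n. cinner z (B i (e n)))"
      proof (rule arg_cong[where f="ser u"], rule ext)
        fix n
        show "cinner (e n) (trn e (B i) x) = cinner z (B i (e n))"
          unfolding trn_def z_def ser_cinner[OF e(1) sqs_coef[OF B_bclin[OF i] e(1)]]
          by (simp add: clinear_zero[OF bclin_clinear[OF B_bclin[OF i]]])
      qed
      finally show ?thesis by simp
    qed
    finally have 1: "(\<Sum>k<r. P i k (elem_op m A B (Q i k (V x)))) = c *\<^sub>C V (trn e (B i) x)" .
    have "S (c *\<^sub>C V (trn e (B i) x)) = W (V (trn e (B i) x))"
      unfolding S_def c_def using M
      by (simp add: scaleC_scaleC scaleC_one of_real_mult[symmetric] del: of_real_mult)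
    also have "\<dots> = trn e (B i) x" by (rule VW(5))
    finally show ?thesis using 1 by simp
  qed
  show ?thesis
  proof (intro exI conjI allI impI)
    show "r \<ge> 1" by (rule r)
    show "M\<^sup>2 * real r > 0" using M r by simp
    fix n i :: nat assume n: "n \<ge> 1" and i: "i < m"
    have a0: "adm \<A> (P i 0) (Q i 0)" using adm[of i 0] i r by simp
    have h0: "0 \<le> hilbert_num TYPE('k) \<A> (elem_op m A B) n"
      by (rule hn_nonneg[OF a0 n])
    have N: "r * n - r + 1 \<ge> 1" by simp
    have "approx_num (r * n - r + 1) (B i) \<le> approx_num (r * n - r + 1) (trn e (B i))"
      by (rule approx_num_trn'[OF e(1) e(2) B_bclin[OF i] N])
    also have "\<dots> \<le> onorm S * onorm V * (real r * hilbert_num TYPE('k) \<A> (elem_op m A B) n)"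
      by (rule family_bound[OF adm[OF i] r n S(1) VW(1) eq[OF i]])
    also have "\<dots> \<le> M\<^sup>2 * 1 * (real r * hilbert_num TYPE('k) \<A> (elem_op m A B) n)"
      by (intro mult_right_mono mult_mono S(2) VW(2)) (simp_all add: h0 bclin_onorm_nonneg VW(1))
    finally show "approx_num (r * n - r + 1) (B i) \<le> M\<^sup>2 * real r * hilbert_num TYPE('k) \<A> (elem_op m A B) n"
      by (simp add: algebra_simps)
  qed
qed

end


theorem proposition4p5:
  fixes \<A> :: "('h::chilbert_space \<Rightarrow> 'h) set"
    and A B :: "nat \<Rightarrow> 'h \<Rightarrow> 'h"
    and m :: nat
  assumes sep: "separable_type TYPE('h)"
    and alg: "cstar_subalgebra \<A>"
    and cpt: "{T. compact_op T} \<subseteq> \<A>"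
    and AB: "\<forall>i<m. A i \<in> \<A> \<and> B i \<in> \<A>"
    and kinf: "\<not> cfinite_dim TYPE('k::chilbert_space)"
  shows
   "(clin_indep_ops m B \<longrightarrow>
       (\<exists>r::nat. \<exists>C::real. r \<ge> 1 \<and> C > 0 \<and>
          (\<forall>n\<ge>1. \<forall>i<m. approx_num (r * n - r + 1) (A i)
                        \<le> C * hilbert_num TYPE('k) \<A> (elem_op m A B) n)) \<and>
       (\<forall>I. calkin_space I \<and> hilb_seq TYPE('k) \<A> (elem_op m A B) \<in> I
             \<longrightarrow> (\<forall>i<m. sing_seq (A i) \<in> I))) \<and>
    (clin_indep_ops m A \<longrightarrow>
       (\<exists>r::nat. \<exists>C::real. r \<ge> 1 \<and> C > 0 \<and>
          (\<forall>n\<ge>1. \<forall>i<m. approx_num (r * n - r + 1) (B i)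
                        \<le> C * hilbert_num TYPE('k) \<A> (elem_op m A B) n)) \<and>
       (\<forall>I. calkin_space I \<and> hilb_seq TYPE('k) \<A> (elem_op m A B) \<in> I
             \<longrightarrow> (\<forall>i<m. sing_seq (B i) \<in> I)))"
proof -
  interpret eo \<A> A B m using alg AB by unfold_locales
  let ?h = "hilbert_num TYPE('k) \<A> (elem_op m A B)"
  have hs: "hilb_seq TYPE('k) \<A> (elem_op m A B) = (\<lambda>n. complex_of_real (?h (Suc n)))"
    by (rule ext) (simp add: hilb_seq_def)
  have ss: "sing_seq T = (\<lambda>n. complex_of_real (approx_num (Suc n) T))" for T :: "'h \<Rightarrow> 'h"
    by (rule ext) (simp add: sing_seq_def)
  show ?thesis
  proof (intro conjI impI)
    assume ind: "clin_indep_ops m B"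
    obtain r :: nat and C :: real where r: "r \<ge> 1" and C: "C > 0"
      and bd: "\<forall>n\<ge>1. \<forall>i<m. approx_num (r * n - r + 1) (A i) \<le> C * ?h n"
      using partA[OF sep cpt kinf ind] by blast
    show "\<exists>r::nat. \<exists>C::real. r \<ge> 1 \<and> C > 0 \<and> (\<forall>n\<ge>1. \<forall>i<m. approx_num (r * n - r + 1) (A i) \<le> C * ?h n)"
      using r C bd by blast
    show "\<forall>I. calkin_space I \<and> hilb_seq TYPE('k) \<A> (elem_op m A B) \<in> I \<longrightarrow> (\<forall>i<m. sing_seq (A i) \<in> I)"
    proof (intro allI impI)
      fix I i assume I: "calkin_space I \<and> hilb_seq TYPE('k) \<A> (elem_op m A B) \<in> I" and i: "i < m"
      have bdi: "\<forall>n\<ge>1. approx_num (r * n - r + 1) (A i) \<le> C * ?h n" using bd i by blast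
      show "sing_seq (A i) \<in> I" unfolding ss
        by (rule calkin_transfer[OF A_bclin[OF i] r bdi]) (use I hs in auto)
    qed
  next
    assume ind: "clin_indep_ops m A"
    obtain r :: nat and C :: real where r: "r \<ge> 1" and C: "C > 0"
      and bd: "\<forall>n\<ge>1. \<forall>i<m. approx_num (r * n - r + 1) (B i) \<le> C * ?h n"
      using partB[OF sep cpt kinf ind] by blast
    show "\<exists>r::nat. \<exists>C::real. r \<ge> 1 \<and> C > 0 \<and> (\<forall>n\<ge>1. \<forall>i<m. approx_num (r * n - r + 1) (B i) \<le> C * ?h n)"
      using r C bd by blast
    show "\<forall>I. calkin_space I \<and> hilb_seq TYPE('k) \<A> (elem_op m A B) \<in> I \<longrightarrow> (\<forall>i<m. sing_seq (B i) \<in> I)"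
    proof (intro allI impI)
      fix I i assume I: "calkin_space I \<and> hilb_seq TYPE('k) \<A> (elem_op m A B) \<in> I" and i: "i < m"
      have bdi: "\<forall>n\<ge>1. approx_num (r * n - r + 1) (B i) \<le> C * ?h n" using bd i by blast
      show "sing_seq (B i) \<in> I" unfolding ss
        by (rule calkin_transfer[OF B_bclin[OF i] r bdi]) (use I hs in auto)
    qed
  qed
qed


end
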